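(* Let $\mathbf C$ be an admissible site and $\alpha$ an infinite cardinal. For a pro-covering morphism $f:V\to U$ and an object $W$ in $\mathrm{Pro}_\alpha\mathbf C$, the diagram \[{\rm Mor}(U,W)\to{\rm Mor}(V,W)\rightrightarrows{\rm Mor}(V\times_UV,W)\] is an equalizer of sets.
   Context: A coherent site is a small category with finite limits and a topology generated by finite coverings; a covering morphism is a morphism generating a covering sieve. $\mathbf C$ is admissible if its topology is subcanonical, finite coproducts $C=\coprod_iC_i$ exist with $\{C_i\to C\}$ a covering, there is a strict initial object, and finite coproducts are disjoint and stable under pullback. $\mathrm{Pro}_\alpha\mathbf C$ is the category whose objects are functors $F:I\to\mathbf C$ with $I$ a cofiltered category with at most $\alpha$ morphisms and ${\rm Mor}(F,G)=\lim_j\operatorname{colim}_i{\rm Mor}_{\mathbf C}(F(i),G(j))$. A morphism $f:V\to U$ in $\mathrm{Pro}_\alpha\mathbf C$ is a pro-covering morphism if it has a level representation $(V_i\to U_i)_{i\in I}$ by covering morphisms of $\mathbf C$. *)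

theory Defs
  imports Main
begin

record ('o, 'a) cat =
  Ob  :: "'o set"
  Ar  :: "'a set"
  Dom :: "'a \<Rightarrow> 'o"
  Cod :: "'a \<Rightarrow> 'o"
  Idt :: "'o \<Rightarrow> 'a"
  Cmp :: "'a \<Rightarrow> 'a \<Rightarrow> 'a"   (* Cmp g f = g o f *)

definition hom :: "('o,'a) cat \<Rightarrow> 'o \<Rightarrow> 'o \<Rightarrow> 'a set" where
  "hom C X Y = {f \<in> Ar C. Dom C f = X \<and> Cod C f = Y}"

definition category :: "('o,'a) cat \<Rightarrow> bool" where
  "category C \<longleftrightarrow>
     (\<forall>f\<in>Ar C. Dom C f \<in> Ob C \<and> Cod C f \<in> Ob C) \<and>
     (\<forall>X\<in>Ob C. Idt C X \<in> hom C X X) \<and>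
     (\<forall>f\<in>Ar C. \<forall>g\<in>Ar C. Cod C f = Dom C g \<longrightarrow> Cmp C g f \<in> hom C (Dom C f) (Cod C g)) \<and>
     (\<forall>f\<in>Ar C. Cmp C f (Idt C (Dom C f)) = f \<and> Cmp C (Idt C (Cod C f)) f = f) \<and>
     (\<forall>f\<in>Ar C. \<forall>g\<in>Ar C. \<forall>h\<in>Ar C. Cod C f = Dom C g \<longrightarrow> Cod C g = Dom C h \<longrightarrow>
        Cmp C h (Cmp C g f) = Cmp C (Cmp C h g) f)"

definition iso :: "('o,'a) cat \<Rightarrow> 'a \<Rightarrow> bool" where
  "iso C f \<longleftrightarrow> f \<in> Ar C \<and> (\<exists>g \<in> hom C (Cod C f) (Dom C f).
      Cmp C g f = Idt C (Dom C f) \<and> Cmp C f g = Idt C (Cod C f))"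

definition initial :: "('o,'a) cat \<Rightarrow> 'o \<Rightarrow> bool" where
  "initial C Z \<longleftrightarrow> Z \<in> Ob C \<and> (\<forall>Y\<in>Ob C. \<exists>!f. f \<in> hom C Z Y)"

definition terminal :: "('o,'a) cat \<Rightarrow> 'o \<Rightarrow> bool" where
  "terminal C T \<longleftrightarrow> T \<in> Ob C \<and> (\<forall>Y\<in>Ob C. \<exists>!f. f \<in> hom C Y T)"

definition is_pullback :: "('o,'a) cat \<Rightarrow> 'a \<Rightarrow> 'a \<Rightarrow> 'o \<Rightarrow> 'a \<Rightarrow> 'a \<Rightarrow> bool" where
  "is_pullback C f g P p q \<longleftrightarrow>
     f \<in> Ar C \<and> g \<in> Ar C \<and> Cod C f = Cod C g \<and>
     p \<in> hom C P (Dom C f) \<and> q \<in> hom C P (Dom C g) \<and> Cmp C f p = Cmp C g q \<and>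
     (\<forall>T\<in>Ob C. \<forall>a \<in> hom C T (Dom C f). \<forall>b \<in> hom C T (Dom C g).
        Cmp C f a = Cmp C g b \<longrightarrow>
        (\<exists>!h. h \<in> hom C T P \<and> Cmp C p h = a \<and> Cmp C q h = b))"

definition has_finite_limits :: "('o,'a) cat \<Rightarrow> bool" where
  "has_finite_limits C \<longleftrightarrow> (\<exists>T. terminal C T) \<and>
     (\<forall>f\<in>Ar C. \<forall>g\<in>Ar C. Cod C f = Cod C g \<longrightarrow> (\<exists>P p q. is_pullback C f g P p q))"

definition is_coproduct :: "('o,'a) cat \<Rightarrow> nat \<Rightarrow> (nat \<Rightarrow> 'o) \<Rightarrow> 'o \<Rightarrow> (nat \<Rightarrow> 'a) \<Rightarrow> bool" where
  "is_coproduct C n Cs X \<iota> \<longleftrightarrow> X \<in> Ob C \<and> (\<forall>i<n. \<iota> i \<in> hom C (Cs i) X) \<and>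
     (\<forall>Y\<in>Ob C. \<forall>h. (\<forall>i<n. h i \<in> hom C (Cs i) Y) \<longrightarrow>
        (\<exists>!g. g \<in> hom C X Y \<and> (\<forall>i<n. Cmp C g (\<iota> i) = h i)))"

definition sieve :: "('o,'a) cat \<Rightarrow> 'o \<Rightarrow> 'a set \<Rightarrow> bool" where
  "sieve C U S \<longleftrightarrow> U \<in> Ob C \<and> S \<subseteq> Ar C \<and> (\<forall>f\<in>S. Cod C f = U) \<and>
     (\<forall>f\<in>S. \<forall>h\<in>Ar C. Cod C h = Dom C f \<longrightarrow> Cmp C f h \<in> S)"

definition gen_sieve :: "('o,'a) cat \<Rightarrow> 'a set \<Rightarrow> 'a set" where
  "gen_sieve C F = {Cmp C f h | f h. f \<in> F \<and> h \<in> Ar C \<and> Cod C h = Dom C f}"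

definition pb_sieve :: "('o,'a) cat \<Rightarrow> 'a \<Rightarrow> 'a set \<Rightarrow> 'a set" where
  "pb_sieve C g S = {h \<in> Ar C. Cod C h = Dom C g \<and> Cmp C g h \<in> S}"

definition grothendieck_topology :: "('o,'a) cat \<Rightarrow> ('o \<Rightarrow> 'a set set) \<Rightarrow> bool" where
  "grothendieck_topology C J \<longleftrightarrow>
     (\<forall>U. \<forall>S\<in>J U. sieve C U S) \<and>
     (\<forall>U\<in>Ob C. {f \<in> Ar C. Cod C f = U} \<in> J U) \<and>
     (\<forall>U. \<forall>S\<in>J U. \<forall>g\<in>Ar C. Cod C g = U \<longrightarrow> pb_sieve C g S \<in> J (Dom C g)) \<and>
     (\<forall>U. \<forall>S\<in>J U. \<forall>R. sieve C U R \<longrightarrow> (\<forall>f\<in>S. pb_sieve C f R \<in> J (Dom C f)) \<longrightarrow> R \<in> J U)"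

definition finitary :: "('o,'a) cat \<Rightarrow> ('o \<Rightarrow> 'a set set) \<Rightarrow> bool" where
  "finitary C J \<longleftrightarrow> (\<forall>U. \<forall>S\<in>J U. \<exists>F. finite F \<and> F \<subseteq> S \<and> gen_sieve C F \<in> J U)"

definition coherent_site :: "('o,'a) cat \<Rightarrow> ('o \<Rightarrow> 'a set set) \<Rightarrow> bool" where
  "coherent_site C J \<longleftrightarrow> category C \<and> has_finite_limits C \<and>
     grothendieck_topology C J \<and> finitary C J"

definition covering_morphism :: "('o,'a) cat \<Rightarrow> ('o \<Rightarrow> 'a set set) \<Rightarrow> 'a \<Rightarrow> bool" where
  "covering_morphism C J f \<longleftrightarrow> f \<in> Ar C \<and> gen_sieve C {f} \<in> J (Cod C f)"

text \<open>Subcanonical: every representable presheaf is a sheaf.\<close>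
definition subcanonical :: "('o,'a) cat \<Rightarrow> ('o \<Rightarrow> 'a set set) \<Rightarrow> bool" where
  "subcanonical C J \<longleftrightarrow> (\<forall>W\<in>Ob C. \<forall>U. \<forall>S\<in>J U. \<forall>x.
     ((\<forall>f\<in>S. x f \<in> hom C (Dom C f) W) \<and>
      (\<forall>f\<in>S. \<forall>h\<in>Ar C. Cod C h = Dom C f \<longrightarrow> x (Cmp C f h) = Cmp C (x f) h)) \<longrightarrow>
     (\<exists>!g. g \<in> hom C U W \<and> (\<forall>f\<in>S. Cmp C g f = x f)))"

definition admissible :: "('o,'a) cat \<Rightarrow> ('o \<Rightarrow> 'a set set) \<Rightarrow> bool" where
  "admissible C J \<longleftrightarrow> coherent_site C J \<and> subcanonical C J \<and>
     \<comment> \<open>finite coproducts exist and the injections form a covering\<close>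
     (\<forall>n Cs. (\<forall>i<n. Cs i \<in> Ob C) \<longrightarrow>
        (\<exists>X \<iota>. is_coproduct C n Cs X \<iota> \<and> gen_sieve C (\<iota> ` {..<n}) \<in> J X)) \<and>
     \<comment> \<open>strict initial object\<close>
     (\<exists>Z. initial C Z \<and> (\<forall>f\<in>Ar C. Cod C f = Z \<longrightarrow> iso C f)) \<and>
     \<comment> \<open>finite coproducts are disjoint\<close>
     (\<forall>n Cs X \<iota>. is_coproduct C n Cs X \<iota> \<longrightarrow>
        (\<forall>i<n. \<forall>j<n. i \<noteq> j \<longrightarrow> (\<forall>P p q. is_pullback C (\<iota> i) (\<iota> j) P p q \<longrightarrow> initial C P))) \<and>
     \<comment> \<open>finite coproducts are stable under pullback\<close>
     (\<forall>n Cs X \<iota>. is_coproduct C n Cs X \<iota> \<longrightarrow>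
        (\<forall>y\<in>Ar C. Cod C y = X \<longrightarrow> (\<forall>P p q.
           (\<forall>i<n. is_pullback C y (\<iota> i) (P i) (p i) (q i)) \<longrightarrow>
           is_coproduct C n P (Dom C y) p)))"

text \<open>Index categories have objects and arrows in a type 'i. The cardinal alpha is
  represented as the cardinality of a set A.\<close>

definition cofiltered :: "('i,'i) cat \<Rightarrow> bool" where
  "cofiltered I \<longleftrightarrow> category I \<and> Ob I \<noteq> {} \<and>
     (\<forall>i\<in>Ob I. \<forall>j\<in>Ob I. \<exists>k u v. u \<in> hom I k i \<and> v \<in> hom I k j) \<and>
     (\<forall>i j. \<forall>u\<in>hom I i j. \<forall>v\<in>hom I i j. \<exists>w\<in>Ar I. Cod I w = i \<and> Cmp I u w = Cmp I v w)"

definition card_le :: "'x set \<Rightarrow> 'y set \<Rightarrow> bool" where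
  "card_le X Y \<longleftrightarrow> (\<exists>g. inj_on g X \<and> g ` X \<subseteq> Y)"

definition is_functor :: "('i,'i) cat \<Rightarrow> ('o,'a) cat \<Rightarrow> ('i \<Rightarrow> 'o) \<Rightarrow> ('i \<Rightarrow> 'a) \<Rightarrow> bool" where
  "is_functor I C Fo Fa \<longleftrightarrow>
     (\<forall>i\<in>Ob I. Fo i \<in> Ob C \<and> Fa (Idt I i) = Idt C (Fo i)) \<and>
     (\<forall>u\<in>Ar I. Fa u \<in> hom C (Fo (Dom I u)) (Fo (Cod I u))) \<and>
     (\<forall>u\<in>Ar I. \<forall>v\<in>Ar I. Cod I u = Dom I v \<longrightarrow> Fa (Cmp I v u) = Cmp C (Fa v) (Fa u))"

type_synonym ('i,'o,'a) proobj = "('i,'i) cat \<times> ('i \<Rightarrow> 'o) \<times> ('i \<Rightarrow> 'a)"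

definition pI :: "('i,'o,'a) proobj \<Rightarrow> ('i,'i) cat" where "pI X = fst X"
definition pF :: "('i,'o,'a) proobj \<Rightarrow> 'i \<Rightarrow> 'o" where "pF X = fst (snd X)"
definition pFa :: "('i,'o,'a) proobj \<Rightarrow> 'i \<Rightarrow> 'a" where "pFa X = snd (snd X)"

definition pro_obj :: "('o,'a) cat \<Rightarrow> 'x set \<Rightarrow> ('i,'o,'a) proobj \<Rightarrow> bool" where
  "pro_obj C A X \<longleftrightarrow> cofiltered (pI X) \<and> card_le (Ar (pI X)) A \<and>
     is_functor (pI X) C (pF X) (pFa X)"

text \<open>Representatives of elements of colim_i Mor_C(X(i), Y(j)), the equivalence
  relation of the cofiltered colimit, and equivalence classes.\<close>
definition prep :: "('o,'a) cat \<Rightarrow> ('i,'o,'a) proobj \<Rightarrow> ('i,'o,'a) proobj \<Rightarrow> 'i \<Rightarrow> 'i \<times> 'a \<Rightarrow> bool" where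
  "prep C X Y j p \<longleftrightarrow> fst p \<in> Ob (pI X) \<and> snd p \<in> hom C (pF X (fst p)) (pF Y j)"

definition peqv :: "('o,'a) cat \<Rightarrow> ('i,'o,'a) proobj \<Rightarrow> 'i \<times> 'a \<Rightarrow> 'i \<times> 'a \<Rightarrow> bool" where
  "peqv C X p q \<longleftrightarrow> (\<exists>k u v. u \<in> hom (pI X) k (fst p) \<and> v \<in> hom (pI X) k (fst q) \<and>
      Cmp C (snd p) (pFa X u) = Cmp C (snd q) (pFa X v))"

definition pcls :: "('o,'a) cat \<Rightarrow> ('i,'o,'a) proobj \<Rightarrow> ('i,'o,'a) proobj \<Rightarrow> 'i \<Rightarrow> 'i \<times> 'a \<Rightarrow> ('i \<times> 'a) set" where
  "pcls C X Y j p = {q. prep C X Y j q \<and> peqv C X p q}"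

text \<open>Mor(X,Y) = lim_j colim_i Mor_C(X(i), Y(j)): a morphism assigns to each
  index j of Y a class, compatibly with the transition maps of Y.\<close>
definition pro_mor :: "('o,'a) cat \<Rightarrow> ('i,'o,'a) proobj \<Rightarrow> ('i,'o,'a) proobj \<Rightarrow> ('i \<Rightarrow> ('i \<times> 'a) set) \<Rightarrow> bool" where
  "pro_mor C X Y \<phi> \<longleftrightarrow>
     (\<forall>j\<in>Ob (pI Y). \<exists>p. prep C X Y j p \<and> \<phi> j = pcls C X Y j p) \<and>
     (\<forall>j. j \<notin> Ob (pI Y) \<longrightarrow> \<phi> j = {}) \<and>
     (\<forall>v\<in>Ar (pI Y). \<forall>p\<in>\<phi> (Dom (pI Y) v). (fst p, Cmp C (pFa Y v) (snd p)) \<in> \<phi> (Cod (pI Y) v))"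

definition pmor :: "('o,'a) cat \<Rightarrow> ('i,'o,'a) proobj \<Rightarrow> ('i,'o,'a) proobj \<Rightarrow> ('i \<Rightarrow> ('i \<times> 'a) set) set" where
  "pmor C X Y = {\<phi>. pro_mor C X Y \<phi>}"

definition pcomp :: "('o,'a) cat \<Rightarrow> ('i,'o,'a) proobj \<Rightarrow> ('i,'o,'a) proobj \<Rightarrow> ('i,'o,'a) proobj \<Rightarrow>
    ('i \<Rightarrow> ('i \<times> 'a) set) \<Rightarrow> ('i \<Rightarrow> ('i \<times> 'a) set) \<Rightarrow> ('i \<Rightarrow> ('i \<times> 'a) set)" where
  "pcomp C X Y Z \<psi> \<phi> = (\<lambda>k. if k \<in> Ob (pI Z) then
      (let q = (SOME q. q \<in> \<psi> k); p = (SOME p. p \<in> \<phi> (fst q))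
       in pcls C X Z k (fst p, Cmp C (snd q) (snd p)))
     else {})"

definition pid :: "('o,'a) cat \<Rightarrow> ('i,'o,'a) proobj \<Rightarrow> ('i \<Rightarrow> ('i \<times> 'a) set)" where
  "pid C X = (\<lambda>j. if j \<in> Ob (pI X) then pcls C X X j (j, Idt C (pF X j)) else {})"

definition pro_iso :: "('o,'a) cat \<Rightarrow> ('i,'o,'a) proobj \<Rightarrow> ('i,'o,'a) proobj \<Rightarrow> ('i \<Rightarrow> ('i \<times> 'a) set) \<Rightarrow> bool" where
  "pro_iso C X Y \<phi> \<longleftrightarrow> pro_mor C X Y \<phi> \<and> (\<exists>\<psi>. pro_mor C Y X \<psi> \<and>
      pcomp C X Y X \<psi> \<phi> = pid C X \<and> pcomp C Y X Y \<phi> \<psi> = pid C Y)"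

definition plevel :: "('o,'a) cat \<Rightarrow> ('i,'o,'a) proobj \<Rightarrow> ('i,'o,'a) proobj \<Rightarrow> ('i \<Rightarrow> 'a) \<Rightarrow> ('i \<Rightarrow> ('i \<times> 'a) set)" where
  "plevel C X Y t = (\<lambda>i. if i \<in> Ob (pI Y) then pcls C X Y i (i, t i) else {})"

definition pro_covering :: "('o,'a) cat \<Rightarrow> ('o \<Rightarrow> 'a set set) \<Rightarrow> 'x set \<Rightarrow>
    ('i,'o,'a) proobj \<Rightarrow> ('i,'o,'a) proobj \<Rightarrow> ('i \<Rightarrow> ('i \<times> 'a) set) \<Rightarrow> bool" where
  "pro_covering C J A V U f \<longleftrightarrow> pro_mor C V U f \<and>
     (\<exists>V' U' t \<theta>V \<theta>U. pro_obj C A V' \<and> pro_obj C A U' \<and> pI V' = pI U' \<and>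
        (\<forall>i\<in>Ob (pI V'). t i \<in> hom C (pF V' i) (pF U' i) \<and> covering_morphism C J (t i)) \<and>
        (\<forall>u\<in>Ar (pI V'). Cmp C (pFa U' u) (t (Dom (pI V') u)) = Cmp C (t (Cod (pI V') u)) (pFa V' u)) \<and>
        pro_iso C V V' \<theta>V \<and> pro_iso C U U' \<theta>U \<and>
        pcomp C V U U' \<theta>U f = pcomp C V V' U' (plevel C V' U' t) \<theta>V)"

definition pro_pullback :: "('o,'a) cat \<Rightarrow> 'x set \<Rightarrow> ('i,'o,'a) proobj \<Rightarrow> ('i,'o,'a) proobj \<Rightarrow> ('i,'o,'a) proobj \<Rightarrow>
    ('i \<Rightarrow> ('i \<times> 'a) set) \<Rightarrow> ('i \<Rightarrow> ('i \<times> 'a) set) \<Rightarrow>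
    ('i,'o,'a) proobj \<Rightarrow> ('i \<Rightarrow> ('i \<times> 'a) set) \<Rightarrow> ('i \<Rightarrow> ('i \<times> 'a) set) \<Rightarrow> bool" where
  "pro_pullback C A V V' U f g P p q \<longleftrightarrow> pro_obj C A P \<and>
     pro_mor C V U f \<and> pro_mor C V' U g \<and> pro_mor C P V p \<and> pro_mor C P V' q \<and>
     pcomp C P V U f p = pcomp C P V' U g q \<and>
     (\<forall>T. pro_obj C A T \<longrightarrow> (\<forall>a\<in>pmor C T V. \<forall>b\<in>pmor C T V'.
        pcomp C T V U f a = pcomp C T V' U g b \<longrightarrow>
        (\<exists>!h. h \<in> pmor C T P \<and> pcomp C T P V p h = a \<and> pcomp C T P V' q h = b)))"

end

theory Submission
  imports Defs
begin
locale ccat = fixes C :: "('o,'a) cat" assumes cat: "category C"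
begin

lemma hom_iff: "f \<in> hom C X Y \<longleftrightarrow> f \<in> Ar C \<and> Dom C f = X \<and> Cod C f = Y"
  by (simp add: hom_def)

lemma ar_dom: "f \<in> Ar C \<Longrightarrow> Dom C f \<in> Ob C" using cat unfolding category_def by blast
lemma ar_cod: "f \<in> Ar C \<Longrightarrow> Cod C f \<in> Ob C" using cat unfolding category_def by blast

lemma id_hom: "X \<in> Ob C \<Longrightarrow> Idt C X \<in> hom C X X" using cat unfolding category_def by blast

lemma comp_hom: "f \<in> hom C X Y \<Longrightarrow> g \<in> hom C Y Z \<Longrightarrow> Cmp C g f \<in> hom C X Z"
  using cat unfolding category_def hom_def by auto

lemma idr: "f \<in> hom C X Y \<Longrightarrow> Cmp C f (Idt C X) = f"
  using cat unfolding category_def hom_def by auto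
lemma idl: "f \<in> hom C X Y \<Longrightarrow> Cmp C (Idt C Y) f = f"
  using cat unfolding category_def hom_def by auto

lemma assoc: "f \<in> hom C X Y \<Longrightarrow> g \<in> hom C Y Z \<Longrightarrow> h \<in> hom C Z W \<Longrightarrow>
   Cmp C h (Cmp C g f) = Cmp C (Cmp C h g) f"
  using cat unfolding category_def hom_def by auto

end

definition pob :: "('o,'a) cat \<Rightarrow> ('i,'o,'a) proobj \<Rightarrow> bool" where
  "pob C X \<longleftrightarrow> cofiltered (pI X) \<and> is_functor (pI X) C (pF X) (pFa X)"

lemma pro_obj_pob: "pro_obj C A X \<Longrightarrow> pob C X"
  by (simp add: pro_obj_def pob_def)

lemma pob_cat: "pob C X \<Longrightarrow> ccat (pI X)"
  by (simp add: pob_def cofiltered_def ccat_def)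

lemma pob_Fob: "pob C X \<Longrightarrow> i \<in> Ob (pI X) \<Longrightarrow> pF X i \<in> Ob C"
  by (simp add: pob_def is_functor_def)

lemma pob_Fid: "pob C X \<Longrightarrow> i \<in> Ob (pI X) \<Longrightarrow> pFa X (Idt (pI X) i) = Idt C (pF X i)"
  by (simp add: pob_def is_functor_def)

lemma pob_Fa: "pob C X \<Longrightarrow> u \<in> hom (pI X) k i \<Longrightarrow> pFa X u \<in> hom C (pF X k) (pF X i)"
  by (auto simp add: pob_def is_functor_def hom_def)

lemma pob_Fcomp: "pob C X \<Longrightarrow> u \<in> hom (pI X) k i \<Longrightarrow> v \<in> hom (pI X) i j \<Longrightarrow>
   pFa X (Cmp (pI X) v u) = Cmp C (pFa X v) (pFa X u)"
  by (auto simp add: pob_def is_functor_def hom_def)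

lemma pob_cone: "pob C X \<Longrightarrow> i \<in> Ob (pI X) \<Longrightarrow> j \<in> Ob (pI X) \<Longrightarrow>
   \<exists>k u v. u \<in> hom (pI X) k i \<and> v \<in> hom (pI X) k j"
  by (simp add: pob_def cofiltered_def)

lemma pob_eq: "pob C X \<Longrightarrow> u \<in> hom (pI X) i j \<Longrightarrow> v \<in> hom (pI X) i j \<Longrightarrow>
   \<exists>k w. w \<in> hom (pI X) k i \<and> Cmp (pI X) u w = Cmp (pI X) v w"
  unfolding pob_def cofiltered_def hom_def by blast

lemma pob_hom_ob: "pob C X \<Longrightarrow> u \<in> hom (pI X) k i \<Longrightarrow> k \<in> Ob (pI X) \<and> i \<in> Ob (pI X)"
  using pob_cat ccat.ar_dom ccat.ar_cod by (fastforce simp: hom_def)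

definition pr :: "('o,'a) cat \<Rightarrow> ('i,'o,'a) proobj \<Rightarrow> 'o \<Rightarrow> 'i \<times> 'a \<Rightarrow> bool" where
  "pr C X Z p \<longleftrightarrow> fst p \<in> Ob (pI X) \<and> snd p \<in> hom C (pF X (fst p)) Z"

lemma prep_pr: "prep C X Y j p = pr C X (pF Y j) p" by (simp add: prep_def pr_def)

context ccat begin

lemma peqv_refl: assumes X: "pob C X" and p: "pr C X Z p" shows "peqv C X p p"
proof -
  interpret I: ccat "pI X" using pob_cat[OF X] .
  have i: "Idt (pI X) (fst p) \<in> hom (pI X) (fst p) (fst p)" using p I.id_hom by (simp add: pr_def)
  show ?thesis unfolding peqv_def using i by blast
qed

lemma peqv_sym: "peqv C X p q \<Longrightarrow> peqv C X q p"
  unfolding peqv_def by metis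

lemma peqv_trans: assumes X: "pob C X" and p: "pr C X Z p" and q: "pr C X Z q" and r: "pr C X Z r"
  and pq: "peqv C X p q" and qr: "peqv C X q r" shows "peqv C X p r"
proof -
  interpret I: ccat "pI X" using pob_cat[OF X] .
  obtain k u v where u: "u \<in> hom (pI X) k (fst p)" and v: "v \<in> hom (pI X) k (fst q)"
    and e1: "Cmp C (snd p) (pFa X u) = Cmp C (snd q) (pFa X v)" using pq unfolding peqv_def by blast
  obtain k' u' v' where u': "u' \<in> hom (pI X) k' (fst q)" and v': "v' \<in> hom (pI X) k' (fst r)"
    and e2: "Cmp C (snd q) (pFa X u') = Cmp C (snd r) (pFa X v')" using qr unfolding peqv_def by blast
  have "k \<in> Ob (pI X)" "k' \<in> Ob (pI X)" using pob_hom_ob[OF X u] pob_hom_ob[OF X u'] by auto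
  then obtain m a b where a: "a \<in> hom (pI X) m k" and b: "b \<in> hom (pI X) m k'"
    using pob_cone[OF X] by blast
  have va: "Cmp (pI X) v a \<in> hom (pI X) m (fst q)" using I.comp_hom[OF a v] .
  have ub: "Cmp (pI X) u' b \<in> hom (pI X) m (fst q)" using I.comp_hom[OF b u'] .
  obtain n w where w: "w \<in> hom (pI X) n m" and ew: "Cmp (pI X) (Cmp (pI X) v a) w = Cmp (pI X) (Cmp (pI X) u' b) w"
    using pob_eq[OF X va ub] by blast
  let ?x = "Cmp (pI X) (Cmp (pI X) u a) w" and ?y = "Cmp (pI X) (Cmp (pI X) v' b) w"
  have x: "?x \<in> hom (pI X) n (fst p)" using I.comp_hom[OF w I.comp_hom[OF a u]] .
  have y: "?y \<in> hom (pI X) n (fst r)" using I.comp_hom[OF w I.comp_hom[OF b v']] .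
  have sp: "snd p \<in> hom C (pF X (fst p)) Z" using p by (simp add: pr_def)
  have sq: "snd q \<in> hom C (pF X (fst q)) Z" using q by (simp add: pr_def)
  have sr: "snd r \<in> hom C (pF X (fst r)) Z" using r by (simp add: pr_def)
  note Fa = pob_Fa[OF X] and Fc = pob_Fcomp[OF X]
  have "Cmp C (snd p) (pFa X ?x) = Cmp C (snd p) (Cmp C (Cmp C (pFa X u) (pFa X a)) (pFa X w))"
    using Fc[OF w I.comp_hom[OF a u]] Fc[OF a u] by simp
  also have "\<dots> = Cmp C (Cmp C (Cmp C (snd p) (pFa X u)) (pFa X a)) (pFa X w)"
    using assoc[OF Fa[OF w] comp_hom[OF Fa[OF a] Fa[OF u]] sp] assoc[OF Fa[OF a] Fa[OF u] sp] by simp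
  also have "\<dots> = Cmp C (Cmp C (Cmp C (snd q) (pFa X v)) (pFa X a)) (pFa X w)" using e1 by simp
  also have "\<dots> = Cmp C (snd q) (pFa X (Cmp (pI X) (Cmp (pI X) v a) w))"
    using assoc[OF Fa[OF w] comp_hom[OF Fa[OF a] Fa[OF v]] sq] assoc[OF Fa[OF a] Fa[OF v] sq]
      Fc[OF w va] Fc[OF a v] by simp
  also have "\<dots> = Cmp C (snd q) (pFa X (Cmp (pI X) (Cmp (pI X) u' b) w))" using ew by simp
  also have "\<dots> = Cmp C (Cmp C (Cmp C (snd q) (pFa X u')) (pFa X b)) (pFa X w)"
    using assoc[OF Fa[OF w] comp_hom[OF Fa[OF b] Fa[OF u']] sq] assoc[OF Fa[OF b] Fa[OF u'] sq]
      Fc[OF w ub] Fc[OF b u'] by simp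
  also have "\<dots> = Cmp C (Cmp C (Cmp C (snd r) (pFa X v')) (pFa X b)) (pFa X w)" using e2 by simp
  also have "\<dots> = Cmp C (snd r) (pFa X ?y)"
    using assoc[OF Fa[OF w] comp_hom[OF Fa[OF b] Fa[OF v']] sr] assoc[OF Fa[OF b] Fa[OF v'] sr]
      Fc[OF w I.comp_hom[OF b v']] Fc[OF b v'] by simp
  finally show ?thesis unfolding peqv_def using x y by blast
qed

lemma peqv_pre: assumes X: "pob C X" and p: "pr C X Z p" and u: "u \<in> hom (pI X) k (fst p)"
  shows "peqv C X p (k, Cmp C (snd p) (pFa X u))" "pr C X Z (k, Cmp C (snd p) (pFa X u))"
proof -
  interpret I: ccat "pI X" using pob_cat[OF X] .
  have k: "k \<in> Ob (pI X)" using pob_hom_ob[OF X u] by auto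
  have i: "Idt (pI X) k \<in> hom (pI X) k k" using I.id_hom[OF k] .
  have sp: "snd p \<in> hom C (pF X (fst p)) Z" using p by (simp add: pr_def)
  have "Cmp C (Cmp C (snd p) (pFa X u)) (pFa X (Idt (pI X) k)) = Cmp C (snd p) (pFa X u)"
    using pob_Fid[OF X k] idr[OF comp_hom[OF pob_Fa[OF X u] sp]] by simp
  then show "peqv C X p (k, Cmp C (snd p) (pFa X u))" unfolding peqv_def using u i
    by (intro exI[of _ k] exI[of _ u] exI[of _ "Idt (pI X) k"]) simp
  show "pr C X Z (k, Cmp C (snd p) (pFa X u))" using k comp_hom[OF pob_Fa[OF X u] sp] by (simp add: pr_def)
qed

lemma peqv_post: assumes X: "pob C X" and p: "pr C X Z p" and q: "pr C X Z q" and e: "peqv C X p q"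
  and g: "g \<in> hom C Z Z'"
  shows "peqv C X (fst p, Cmp C g (snd p)) (fst q, Cmp C g (snd q))"
proof -
  obtain k u v where u: "u \<in> hom (pI X) k (fst p)" and v: "v \<in> hom (pI X) k (fst q)"
    and e1: "Cmp C (snd p) (pFa X u) = Cmp C (snd q) (pFa X v)" using e unfolding peqv_def by blast
  have sp: "snd p \<in> hom C (pF X (fst p)) Z" using p by (simp add: pr_def)
  have sq: "snd q \<in> hom C (pF X (fst q)) Z" using q by (simp add: pr_def)
  have "Cmp C (Cmp C g (snd p)) (pFa X u) = Cmp C (Cmp C g (snd q)) (pFa X v)"
    using assoc[OF pob_Fa[OF X u] sp g] assoc[OF pob_Fa[OF X v] sq g] e1 by simp
  then show ?thesis unfolding peqv_def using u v by auto
qed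

end

context ccat begin

lemma mem_pcls: "q \<in> pcls C X Y j p \<longleftrightarrow> pr C X (pF Y j) q \<and> peqv C X p q"
  by (simp add: pcls_def prep_pr)

lemma pcls_self: "pob C X \<Longrightarrow> pr C X (pF Y j) p \<Longrightarrow> p \<in> pcls C X Y j p"
  using peqv_refl[of X "pF Y j" p] by (simp add: mem_pcls)

lemma pm_prep: assumes "pro_mor C X Y \<phi>" "p \<in> \<phi> j"
  shows "j \<in> Ob (pI Y)" "pr C X (pF Y j) p"
proof -
  show j: "j \<in> Ob (pI Y)"
  proof (rule ccontr)
    assume "j \<notin> Ob (pI Y)" then have "\<phi> j = {}" using assms(1) unfolding pro_mor_def by simp
    then show False using assms(2) by simp
  qed
  then obtain r where "\<phi> j = pcls C X Y j r" using assms(1) unfolding pro_mor_def by auto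
  then show "pr C X (pF Y j) p" using assms(2) by (simp add: mem_pcls)
qed

lemma pm_rep: assumes "pro_mor C X Y \<phi>" "j \<in> Ob (pI Y)"
  obtains r where "pr C X (pF Y j) r" "\<phi> j = pcls C X Y j r"
  using assms unfolding pro_mor_def prep_pr by blast

lemma pm_ne: assumes X: "pob C X" and "pro_mor C X Y \<phi>" "j \<in> Ob (pI Y)"
  obtains p where "p \<in> \<phi> j"
proof -
  obtain r where "pr C X (pF Y j) r" "\<phi> j = pcls C X Y j r" using pm_rep[OF assms(2,3)] by blast
  then show ?thesis using that pcls_self[OF X, of Y j r] by auto
qed

lemma pm_mem_iff: assumes X: "pob C X" and m: "pro_mor C X Y \<phi>" and p: "p \<in> \<phi> j"
  shows "q \<in> \<phi> j \<longleftrightarrow> pr C X (pF Y j) q \<and> peqv C X p q"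
proof -
  have j: "j \<in> Ob (pI Y)" and pp: "pr C X (pF Y j) p" using pm_prep[OF m p] by auto
  obtain r where r: "pr C X (pF Y j) r" and e: "\<phi> j = pcls C X Y j r" using pm_rep[OF m j] by blast
  have rp: "peqv C X r p" using p e by (simp add: mem_pcls)
  show ?thesis
  proof
    assume "q \<in> \<phi> j"
    then have q: "pr C X (pF Y j) q" and rq: "peqv C X r q" using e by (auto simp: mem_pcls)
    show "pr C X (pF Y j) q \<and> peqv C X p q" using q peqv_trans[OF X pp r q peqv_sym[OF rp] rq] by simp
  next
    assume a: "pr C X (pF Y j) q \<and> peqv C X p q"
    then have "peqv C X r q" using peqv_trans[OF X r pp _ rp] by simp
    then show "q \<in> \<phi> j" using e a by (simp add: mem_pcls)
  qed
qed

lemma pm_eqv: "pob C X \<Longrightarrow> pro_mor C X Y \<phi> \<Longrightarrow> p \<in> \<phi> j \<Longrightarrow> q \<in> \<phi> j \<Longrightarrow> peqv C X p q"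
  using pm_mem_iff[of X Y \<phi> p j q] by simp

lemma pm_ext: assumes X: "pob C X" and m1: "pro_mor C X Y \<phi>" and m2: "pro_mor C X Y \<psi>"
  and c: "\<And>j. j \<in> Ob (pI Y) \<Longrightarrow> \<exists>p. p \<in> \<phi> j \<and> p \<in> \<psi> j"
  shows "\<phi> = \<psi>"
proof
  fix j
  show "\<phi> j = \<psi> j"
  proof (cases "j \<in> Ob (pI Y)")
    case True
    then obtain p where p1: "p \<in> \<phi> j" and p2: "p \<in> \<psi> j" using c by blast
    show ?thesis using pm_mem_iff[OF X m1 p1] pm_mem_iff[OF X m2 p2] by blast
  next
    case False then show ?thesis using m1 m2 unfolding pro_mor_def by simp
  qed
qed

lemma pm_trans: assumes "pro_mor C X Y \<phi>" "v \<in> hom (pI Y) j j'" "p \<in> \<phi> j"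
  shows "(fst p, Cmp C (pFa Y v) (snd p)) \<in> \<phi> j'"
  using assms unfolding pro_mor_def hom_def by blast

lemma pm_intro: assumes X: "pob C X" and Y: "pob C Y"
  and r: "\<And>j. j \<in> Ob (pI Y) \<Longrightarrow> pr C X (pF Y j) (r j) \<and> \<phi> j = pcls C X Y j (r j)"
  and n: "\<And>j. j \<notin> Ob (pI Y) \<Longrightarrow> \<phi> j = {}"
  and t: "\<And>v. v \<in> Ar (pI Y) \<Longrightarrow> peqv C X (fst (r (Dom (pI Y) v)), Cmp C (pFa Y v) (snd (r (Dom (pI Y) v)))) (r (Cod (pI Y) v))"
  shows "pro_mor C X Y \<phi>"
proof -
  have A: "\<forall>j\<in>Ob (pI Y). \<exists>p. prep C X Y j p \<and> \<phi> j = pcls C X Y j p"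
    using r unfolding prep_pr by blast
  have B: "\<forall>j. j \<notin> Ob (pI Y) \<longrightarrow> \<phi> j = {}" using n by blast
  have D: "(fst p, Cmp C (pFa Y v) (snd p)) \<in> \<phi> (Cod (pI Y) v)"
    if v: "v \<in> Ar (pI Y)" and p: "p \<in> \<phi> (Dom (pI Y) v)" for v p
  proof -
  interpret I: ccat "pI Y" using pob_cat[OF Y] .
  define a where "a = Dom (pI Y) v"
  define b where "b = Cod (pI Y) v"
  have va: "a \<in> Ob (pI Y)" "b \<in> Ob (pI Y)" using v I.ar_dom I.ar_cod a_def b_def by auto
  have vh: "v \<in> hom (pI Y) a b" using v by (simp add: hom_def a_def b_def)
  have Fv: "pFa Y v \<in> hom C (pF Y a) (pF Y b)" using pob_Fa[OF Y vh] .
  have pp: "pr C X (pF Y a) p" and rp: "peqv C X (r a) p" using p r[OF va(1)] a_def by (auto simp: mem_pcls)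
  have ra: "pr C X (pF Y a) (r a)" using r[OF va(1)] by blast
  have rb: "pr C X (pF Y b) (r b)" using r[OF va(2)] by blast
  have p2: "pr C X (pF Y b) (fst p, Cmp C (pFa Y v) (snd p))" using pp comp_hom[OF _ Fv] by (auto simp: pr_def)
  have r2: "pr C X (pF Y b) (fst (r a), Cmp C (pFa Y v) (snd (r a)))" using ra comp_hom[OF _ Fv] by (auto simp: pr_def)
  have e1: "peqv C X (fst (r a), Cmp C (pFa Y v) (snd (r a))) (fst p, Cmp C (pFa Y v) (snd p))"
    using peqv_post[OF X ra pp rp Fv] .
  have tv: "peqv C X (fst (r a), Cmp C (pFa Y v) (snd (r a))) (r b)" using t[OF v] a_def b_def by simp
  have "peqv C X (r b) (fst p, Cmp C (pFa Y v) (snd p))"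
    using peqv_trans[OF X rb r2 p2 peqv_sym[OF tv] e1] .
  then have "(fst p, Cmp C (pFa Y v) (snd p)) \<in> pcls C X Y b (r b)" using p2 by (simp add: mem_pcls)
  then show ?thesis using r[OF va(2)] b_def by simp
  qed
  show ?thesis unfolding pro_mor_def using A B D by blast
qed

end

context ccat begin

lemma comp_wd: assumes X: "pob C X" and Y: "pob C Y" and Z: "pob C Z"
  and ps: "pro_mor C Y Z \<psi>" and ph: "pro_mor C X Y \<phi>"
  and q: "q \<in> \<psi> k" and q': "q' \<in> \<psi> k" and p: "p \<in> \<phi> (fst q)" and p': "p' \<in> \<phi> (fst q')"
  shows "peqv C X (fst p, Cmp C (snd q) (snd p)) (fst p', Cmp C (snd q') (snd p'))"
    "pr C X (pF Z k) (fst p, Cmp C (snd q) (snd p))"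
proof -
  interpret I: ccat "pI Y" using pob_cat[OF Y] .
  have k: "k \<in> Ob (pI Z)" and qr: "pr C Y (pF Z k) q" using pm_prep[OF ps q] by auto
  have qr': "pr C Y (pF Z k) q'" using pm_prep[OF ps q'] by auto
  have pr1: "pr C X (pF Y (fst q)) p" using pm_prep[OF ph p] by auto
  have pr1': "pr C X (pF Y (fst q')) p'" using pm_prep[OF ph p'] by auto
  have sq: "snd q \<in> hom C (pF Y (fst q)) (pF Z k)" using qr by (simp add: pr_def)
  have sq': "snd q' \<in> hom C (pF Y (fst q')) (pF Z k)" using qr' by (simp add: pr_def)
  have P1: "pr C X (pF Z k) (fst p, Cmp C (snd q) (snd p))"
    using pr1 comp_hom[OF _ sq] by (auto simp: pr_def)
  then show "pr C X (pF Z k) (fst p, Cmp C (snd q) (snd p))" .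
  have P1': "pr C X (pF Z k) (fst p', Cmp C (snd q') (snd p'))"
    using pr1' comp_hom[OF _ sq'] by (auto simp: pr_def)
  have "peqv C Y q q'" using pm_eqv[OF Y ps q q'] .
  then obtain m a b where a: "a \<in> hom (pI Y) m (fst q)" and b: "b \<in> hom (pI Y) m (fst q')"
    and e: "Cmp C (snd q) (pFa Y a) = Cmp C (snd q') (pFa Y b)" unfolding peqv_def by blast
  have m: "m \<in> Ob (pI Y)" using pob_hom_ob[OF Y a] by auto
  obtain p'' where p'': "p'' \<in> \<phi> m" using pm_ne[OF X ph m] by blast
  have pr'': "pr C X (pF Y m) p''" using pm_prep[OF ph p''] by auto
  have sp'': "snd p'' \<in> hom C (pF X (fst p'')) (pF Y m)" using pr'' by (simp add: pr_def)
  have Fa: "pFa Y a \<in> hom C (pF Y m) (pF Y (fst q))" using pob_Fa[OF Y a] .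
  have Fb: "pFa Y b \<in> hom C (pF Y m) (pF Y (fst q'))" using pob_Fa[OF Y b] .
  let ?x = "(fst p'', Cmp C (pFa Y a) (snd p''))" and ?y = "(fst p'', Cmp C (pFa Y b) (snd p''))"
  have xa: "?x \<in> \<phi> (fst q)" using pm_trans[OF ph a p''] by simp
  have yb: "?y \<in> \<phi> (fst q')" using pm_trans[OF ph b p''] by simp
  have xr: "pr C X (pF Y (fst q)) ?x" using pm_prep[OF ph xa] by auto
  have yr: "pr C X (pF Y (fst q')) ?y" using pm_prep[OF ph yb] by auto
  have e1: "peqv C X (fst p, Cmp C (snd q) (snd p)) (fst ?x, Cmp C (snd q) (snd ?x))"
    using peqv_post[OF X pr1 xr pm_eqv[OF X ph p xa] sq] .
  have e2: "peqv C X (fst ?y, Cmp C (snd q') (snd ?y)) (fst p', Cmp C (snd q') (snd p'))"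
    using peqv_post[OF X yr pr1' pm_eqv[OF X ph yb p'] sq'] .
  have eq: "Cmp C (snd q) (snd ?x) = Cmp C (snd q') (snd ?y)"
    using assoc[OF sp'' Fa sq] assoc[OF sp'' Fb sq'] e by simp
  have Xr: "pr C X (pF Z k) (fst ?x, Cmp C (snd q) (snd ?x))" using xr comp_hom[OF _ sq] by (auto simp: pr_def)
  show "peqv C X (fst p, Cmp C (snd q) (snd p)) (fst p', Cmp C (snd q') (snd p'))"
    using peqv_trans[OF X P1 Xr P1' e1] e2 eq by simp
qed

lemma pcomp_eq: assumes "k \<in> Ob (pI Z)"
  shows "pcomp C X Y Z \<psi> \<phi> k = pcls C X Z k (fst (SOME p. p \<in> \<phi> (fst (SOME q. q \<in> \<psi> k))),
      Cmp C (snd (SOME q. q \<in> \<psi> k)) (snd (SOME p. p \<in> \<phi> (fst (SOME q. q \<in> \<psi> k)))))"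
  using assms unfolding pcomp_def Let_def by simp

lemma pcomp_some: assumes X: "pob C X" and Y: "pob C Y" and Z: "pob C Z"
  and ps: "pro_mor C Y Z \<psi>" and ph: "pro_mor C X Y \<phi>" and k: "k \<in> Ob (pI Z)"
  shows "(SOME q. q \<in> \<psi> k) \<in> \<psi> k" "(SOME p. p \<in> \<phi> (fst (SOME q. q \<in> \<psi> k))) \<in> \<phi> (fst (SOME q. q \<in> \<psi> k))"
proof -
  obtain q0 where "q0 \<in> \<psi> k" using pm_ne[OF Y ps k] by blast
  then show q: "(SOME q. q \<in> \<psi> k) \<in> \<psi> k" by (rule someI)
  have "fst (SOME q. q \<in> \<psi> k) \<in> Ob (pI Y)" using pm_prep[OF ps q] by (simp add: pr_def)
  then obtain p0 where "p0 \<in> \<phi> (fst (SOME q. q \<in> \<psi> k))" using pm_ne[OF X ph] by blast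
  then show "(SOME p. p \<in> \<phi> (fst (SOME q. q \<in> \<psi> k))) \<in> \<phi> (fst (SOME q. q \<in> \<psi> k))" by (rule someI)
qed

lemma pcomp_mem: assumes X: "pob C X" and Y: "pob C Y" and Z: "pob C Z"
  and ps: "pro_mor C Y Z \<psi>" and ph: "pro_mor C X Y \<phi>"
  and q: "q \<in> \<psi> k" and p: "p \<in> \<phi> (fst q)"
  shows "(fst p, Cmp C (snd q) (snd p)) \<in> pcomp C X Y Z \<psi> \<phi> k"
proof -
  have k: "k \<in> Ob (pI Z)" using pm_prep[OF ps q] by auto
  note S = pcomp_some[OF X Y Z ps ph k]
  show ?thesis unfolding pcomp_eq[OF k] mem_pcls
    using comp_wd[OF X Y Z ps ph S(1) q S(2) p] comp_wd[OF X Y Z ps ph q S(1) p S(2)] by simp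
qed

lemma pcomp_pm: assumes X: "pob C X" and Y: "pob C Y" and Z: "pob C Z"
  and ps: "pro_mor C Y Z \<psi>" and ph: "pro_mor C X Y \<phi>"
  shows "pro_mor C X Z (pcomp C X Y Z \<psi> \<phi>)"
proof -
  define r where "r k = (fst (SOME p. p \<in> \<phi> (fst (SOME q. q \<in> \<psi> k))),
      Cmp C (snd (SOME q. q \<in> \<psi> k)) (snd (SOME p. p \<in> \<phi> (fst (SOME q. q \<in> \<psi> k)))))" for k
  show ?thesis
  proof (rule pm_intro[OF X Z, where r = r])
    fix k assume k: "k \<in> Ob (pI Z)"
    note S = pcomp_some[OF X Y Z ps ph k]
    show "pr C X (pF Z k) (r k) \<and> pcomp C X Y Z \<psi> \<phi> k = pcls C X Z k (r k)"
      using comp_wd(2)[OF X Y Z ps ph S(1) S(1) S(2) S(2)] pcomp_eq[OF k] unfolding r_def by simp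
  next
    fix k assume "k \<notin> Ob (pI Z)" then show "pcomp C X Y Z \<psi> \<phi> k = {}" unfolding pcomp_def by simp
  next
    fix v assume v: "v \<in> Ar (pI Z)"
    interpret I: ccat "pI Z" using pob_cat[OF Z] .
    define a where "a = Dom (pI Z) v"
    define b where "b = Cod (pI Z) v"
    have va: "a \<in> Ob (pI Z)" "b \<in> Ob (pI Z)" using v I.ar_dom I.ar_cod a_def b_def by auto
    have vh: "v \<in> hom (pI Z) a b" using v by (simp add: hom_def a_def b_def)
    have Fv: "pFa Z v \<in> hom C (pF Z a) (pF Z b)" using pob_Fa[OF Z vh] .
    note S = pcomp_some[OF X Y Z ps ph va(1)]
    let ?q = "SOME q. q \<in> \<psi> a" and ?p = "SOME p. p \<in> \<phi> (fst (SOME q. q \<in> \<psi> a))"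
    have q2: "(fst ?q, Cmp C (pFa Z v) (snd ?q)) \<in> \<psi> b" using pm_trans[OF ps vh S(1)] .
    have m: "(fst ?p, Cmp C (Cmp C (pFa Z v) (snd ?q)) (snd ?p)) \<in> pcomp C X Y Z \<psi> \<phi> b"
      using pcomp_mem[OF X Y Z ps ph q2] S(2) by simp
    have sq: "snd ?q \<in> hom C (pF Y (fst ?q)) (pF Z a)" using pm_prep[OF ps S(1)] by (simp add: pr_def)
    have sp: "snd ?p \<in> hom C (pF X (fst ?p)) (pF Y (fst ?q))" using pm_prep[OF ph S(2)] by (simp add: pr_def)
    have "pcomp C X Y Z \<psi> \<phi> b = pcls C X Z b (r b)" using pcomp_eq[OF va(2)] unfolding r_def by simp
    then have "peqv C X (r b) (fst ?p, Cmp C (Cmp C (pFa Z v) (snd ?q)) (snd ?p))" using m by (simp add: mem_pcls)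
    then show "peqv C X (fst (r (Dom (pI Z) v)), Cmp C (pFa Z v) (snd (r (Dom (pI Z) v)))) (r (Cod (pI Z) v))"
      using peqv_sym assoc[OF sp sq Fv] unfolding a_def[symmetric] b_def[symmetric] r_def by simp
  qed
qed

lemma pcomp_assoc: assumes X: "pob C X" and Y: "pob C Y" and Z: "pob C Z" and W: "pob C W"
  and ch: "pro_mor C Z W \<chi>" and ps: "pro_mor C Y Z \<psi>" and ph: "pro_mor C X Y \<phi>"
  shows "pcomp C X Z W \<chi> (pcomp C X Y Z \<psi> \<phi>) = pcomp C X Y W (pcomp C Y Z W \<chi> \<psi>) \<phi>"
proof (rule pm_ext[OF X])
  show "pro_mor C X W (pcomp C X Z W \<chi> (pcomp C X Y Z \<psi> \<phi>))"
    using pcomp_pm[OF X Z W ch pcomp_pm[OF X Y Z ps ph]] .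
  show "pro_mor C X W (pcomp C X Y W (pcomp C Y Z W \<chi> \<psi>) \<phi>)"
    using pcomp_pm[OF X Y W pcomp_pm[OF Y Z W ch ps] ph] .
  fix k assume k: "k \<in> Ob (pI W)"
  obtain r where r: "r \<in> \<chi> k" using pm_ne[OF Z ch k] by blast
  have "fst r \<in> Ob (pI Z)" using pm_prep[OF ch r] by (simp add: pr_def)
  then obtain q where q: "q \<in> \<psi> (fst r)" using pm_ne[OF Y ps] by blast
  have "fst q \<in> Ob (pI Y)" using pm_prep[OF ps q] by (simp add: pr_def)
  then obtain p where p: "p \<in> \<phi> (fst q)" using pm_ne[OF X ph] by blast
  have sr: "snd r \<in> hom C (pF Z (fst r)) (pF W k)" using pm_prep[OF ch r] by (simp add: pr_def)
  have sq: "snd q \<in> hom C (pF Y (fst q)) (pF Z (fst r))" using pm_prep[OF ps q] by (simp add: pr_def)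
  have sp: "snd p \<in> hom C (pF X (fst p)) (pF Y (fst q))" using pm_prep[OF ph p] by (simp add: pr_def)
  have m1: "(fst p, Cmp C (snd q) (snd p)) \<in> pcomp C X Y Z \<psi> \<phi> (fst r)" using pcomp_mem[OF X Y Z ps ph q p] .
  have m2: "(fst q, Cmp C (snd r) (snd q)) \<in> pcomp C Y Z W \<chi> \<psi> k" using pcomp_mem[OF Y Z W ch ps r q] .
  have A: "(fst p, Cmp C (snd r) (Cmp C (snd q) (snd p))) \<in> pcomp C X Z W \<chi> (pcomp C X Y Z \<psi> \<phi>) k"
    using pcomp_mem[OF X Z W ch pcomp_pm[OF X Y Z ps ph] r m1] by simp
  have B: "(fst p, Cmp C (Cmp C (snd r) (snd q)) (snd p)) \<in> pcomp C X Y W (pcomp C Y Z W \<chi> \<psi>) \<phi> k"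
    using pcomp_mem[OF X Y W pcomp_pm[OF Y Z W ch ps] ph m2] p by simp
  show "\<exists>x. x \<in> pcomp C X Z W \<chi> (pcomp C X Y Z \<psi> \<phi>) k \<and> x \<in> pcomp C X Y W (pcomp C Y Z W \<chi> \<psi>) \<phi> k"
    using A B assoc[OF sp sq sr] by auto
qed

end

context ccat begin

lemma pid_mem: assumes "pob C X" "j \<in> Ob (pI X)" shows "(j, Idt C (pF X j)) \<in> pid C X j"
  unfolding pid_def using assms pcls_self[of X X j "(j, Idt C (pF X j))"] id_hom[OF pob_Fob[OF assms]] by (simp add: pr_def)

lemma pid_pm: assumes X: "pob C X" shows "pro_mor C X X (pid C X)"
proof (rule pm_intro[OF X X, where r = "\<lambda>j. (j, Idt C (pF X j))"])
  fix j assume j: "j \<in> Ob (pI X)"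
  show "pr C X (pF X j) (j, Idt C (pF X j)) \<and> pid C X j = pcls C X X j (j, Idt C (pF X j))"
    using j id_hom[OF pob_Fob[OF X j]] unfolding pid_def by (simp add: pr_def)
next
  fix j assume "j \<notin> Ob (pI X)" then show "pid C X j = {}" unfolding pid_def by simp
next
  fix v assume v: "v \<in> Ar (pI X)"
  interpret I: ccat "pI X" using pob_cat[OF X] .
  define a where "a = Dom (pI X) v"
  define b where "b = Cod (pI X) v"
  have va: "a \<in> Ob (pI X)" "b \<in> Ob (pI X)" using v I.ar_dom I.ar_cod a_def b_def by auto
  have vh: "v \<in> hom (pI X) a b" using v by (simp add: hom_def a_def b_def)
  have Fv: "pFa X v \<in> hom C (pF X a) (pF X b)" using pob_Fa[OF X vh] .
  have ia: "Idt (pI X) a \<in> hom (pI X) a a" using I.id_hom[OF va(1)] .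
  have "Cmp C (Cmp C (pFa X v) (Idt C (pF X a))) (pFa X (Idt (pI X) a)) = Cmp C (Idt C (pF X b)) (pFa X v)"
    using pob_Fid[OF X va(1)] idr[OF Fv] idl[OF Fv] by simp
  then have "peqv C X (a, Cmp C (pFa X v) (Idt C (pF X a))) (b, Idt C (pF X b))"
    unfolding peqv_def using ia vh by fastforce
  then show "peqv C X (fst (Dom (pI X) v, Idt C (pF X (Dom (pI X) v))), Cmp C (pFa X v) (snd (Dom (pI X) v, Idt C (pF X (Dom (pI X) v)))))
          (Cod (pI X) v, Idt C (pF X (Cod (pI X) v)))" unfolding a_def b_def by simp
qed

lemma pid_left: assumes X: "pob C X" and Y: "pob C Y" and ph: "pro_mor C X Y \<phi>"
  shows "pcomp C X Y Y (pid C Y) \<phi> = \<phi>"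
proof (rule pm_ext[OF X pcomp_pm[OF X Y Y pid_pm[OF Y] ph] ph])
  fix k assume k: "k \<in> Ob (pI Y)"
  obtain p where p: "p \<in> \<phi> k" using pm_ne[OF X ph k] by blast
  have sp: "snd p \<in> hom C (pF X (fst p)) (pF Y k)" using pm_prep[OF ph p] by (simp add: pr_def)
  have "(fst p, Cmp C (Idt C (pF Y k)) (snd p)) \<in> pcomp C X Y Y (pid C Y) \<phi> k"
    using pcomp_mem[OF X Y Y pid_pm[OF Y] ph pid_mem[OF Y k]] p by simp
  then have "p \<in> pcomp C X Y Y (pid C Y) \<phi> k" using idl[OF sp] by simp
  then show "\<exists>x. x \<in> pcomp C X Y Y (pid C Y) \<phi> k \<and> x \<in> \<phi> k" using p by blast
qed

lemma pid_right: assumes X: "pob C X" and Y: "pob C Y" and ph: "pro_mor C X Y \<phi>"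
  shows "pcomp C X X Y \<phi> (pid C X) = \<phi>"
proof (rule pm_ext[OF X pcomp_pm[OF X X Y ph pid_pm[OF X]] ph])
  fix k assume k: "k \<in> Ob (pI Y)"
  obtain q where q: "q \<in> \<phi> k" using pm_ne[OF X ph k] by blast
  have sq: "snd q \<in> hom C (pF X (fst q)) (pF Y k)" and fq: "fst q \<in> Ob (pI X)"
    using pm_prep[OF ph q] by (auto simp add: pr_def)
  have "(fst q, Cmp C (snd q) (Idt C (pF X (fst q)))) \<in> pcomp C X X Y \<phi> (pid C X) k"
    using pcomp_mem[OF X X Y ph pid_pm[OF X] q pid_mem[OF X fq]] by simp
  then have "q \<in> pcomp C X X Y \<phi> (pid C X) k" using idr[OF sq] by simp
  then show "\<exists>x. x \<in> pcomp C X X Y \<phi> (pid C X) k \<and> x \<in> \<phi> k" using q by blast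
qed

definition natl :: "('o,'a) cat \<Rightarrow> ('i,'o,'a) proobj \<Rightarrow> ('i,'o,'a) proobj \<Rightarrow> ('i \<Rightarrow> 'a) \<Rightarrow> bool" where
  "natl C' X Y t \<longleftrightarrow> pI X = pI Y \<and> (\<forall>i\<in>Ob (pI X). t i \<in> hom C' (pF X i) (pF Y i)) \<and>
     (\<forall>u\<in>Ar (pI X). Cmp C' (pFa Y u) (t (Dom (pI X) u)) = Cmp C' (t (Cod (pI X) u)) (pFa X u))"

lemma plevel_mem: "pob C X \<Longrightarrow> natl C X Y t \<Longrightarrow> i \<in> Ob (pI Y) \<Longrightarrow> (i, t i) \<in> plevel C X Y t i"
  unfolding plevel_def natl_def using pcls_self[of X Y i "(i, t i)"] by (simp add: pr_def)

lemma plevel_pm: assumes X: "pob C X" and Y: "pob C Y" and t: "natl C X Y t"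
  shows "pro_mor C X Y (plevel C X Y t)"
proof (rule pm_intro[OF X Y, where r = "\<lambda>j. (j, t j)"])
  have I: "pI X = pI Y" using t by (simp add: natl_def)
  fix j assume j: "j \<in> Ob (pI Y)"
  show "pr C X (pF Y j) (j, t j) \<and> plevel C X Y t j = pcls C X Y j (j, t j)"
    using j t I unfolding plevel_def natl_def by (simp add: pr_def)
next
  fix j assume "j \<notin> Ob (pI Y)" then show "plevel C X Y t j = {}" unfolding plevel_def by simp
next
  have I: "pI X = pI Y" using t by (simp add: natl_def)
  fix v assume v: "v \<in> Ar (pI Y)"
  interpret I: ccat "pI X" using pob_cat[OF X] .
  define a where "a = Dom (pI X) v"
  define b where "b = Cod (pI X) v"
  have va: "a \<in> Ob (pI X)" "b \<in> Ob (pI X)" using v I I.ar_dom I.ar_cod a_def b_def by auto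
  have vh: "v \<in> hom (pI X) a b" using v I by (simp add: hom_def a_def b_def)
  have ia: "Idt (pI X) a \<in> hom (pI X) a a" using I.id_hom[OF va(1)] .
  have ta: "t a \<in> hom C (pF X a) (pF Y a)" using t va unfolding natl_def by blast
  have Fv: "pFa Y v \<in> hom C (pF Y a) (pF Y b)" using pob_Fa[OF Y, of v a b] vh I by simp
  have nat: "Cmp C (pFa Y v) (t a) = Cmp C (t b) (pFa X v)" using t v I unfolding natl_def a_def b_def by simp
  have "Cmp C (Cmp C (pFa Y v) (t a)) (pFa X (Idt (pI X) a)) = Cmp C (t b) (pFa X v)"
    using pob_Fid[OF X va(1)] idr[OF comp_hom[OF ta Fv]] nat by simp
  then have "peqv C X (a, Cmp C (pFa Y v) (t a)) (b, t b)"
    unfolding peqv_def using ia vh by fastforce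
  then show "peqv C X (fst (Dom (pI Y) v, t (Dom (pI Y) v)), Cmp C (pFa Y v) (snd (Dom (pI Y) v, t (Dom (pI Y) v))))
          (Cod (pI Y) v, t (Cod (pI Y) v))" unfolding a_def b_def I by simp
qed

end

context ccat begin

lemma gen1_iff: "s \<in> gen_sieve C {t} \<longleftrightarrow> (\<exists>h. s = Cmp C t h \<and> h \<in> Ar C \<and> Cod C h = Dom C t)"
  unfolding gen_sieve_def by blast

lemma subc_use: assumes sc: "subcanonical C J" and W: "W \<in> Ob C" and S: "S \<in> J U"
  and H: "(\<forall>f\<in>S. x f \<in> hom C (Dom C f) W) \<and>
      (\<forall>f\<in>S. \<forall>h\<in>Ar C. Cod C h = Dom C f \<longrightarrow> x (Cmp C f h) = Cmp C (x f) h)"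
  shows "\<exists>!g. g \<in> hom C U W \<and> (\<forall>f\<in>S. Cmp C g f = x f)"
proof -
  have "\<forall>W\<in>Ob C. \<forall>U. \<forall>S\<in>J U. \<forall>x.
     ((\<forall>f\<in>S. x f \<in> hom C (Dom C f) W) \<and>
      (\<forall>f\<in>S. \<forall>h\<in>Ar C. Cod C h = Dom C f \<longrightarrow> x (Cmp C f h) = Cmp C (x f) h)) \<longrightarrow>
     (\<exists>!g. g \<in> hom C U W \<and> (\<forall>f\<in>S. Cmp C g f = x f))" using sc unfolding subcanonical_def .
  then have "\<forall>U. \<forall>S\<in>J U. \<forall>x.
     ((\<forall>f\<in>S. x f \<in> hom C (Dom C f) W) \<and>
      (\<forall>f\<in>S. \<forall>h\<in>Ar C. Cod C h = Dom C f \<longrightarrow> x (Cmp C f h) = Cmp C (x f) h)) \<longrightarrow>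
     (\<exists>!g. g \<in> hom C U W \<and> (\<forall>f\<in>S. Cmp C g f = x f))" using W by (rule bspec)
  then have "\<forall>S\<in>J U. \<forall>x.
     ((\<forall>f\<in>S. x f \<in> hom C (Dom C f) W) \<and>
      (\<forall>f\<in>S. \<forall>h\<in>Ar C. Cod C h = Dom C f \<longrightarrow> x (Cmp C f h) = Cmp C (x f) h)) \<longrightarrow>
     (\<exists>!g. g \<in> hom C U W \<and> (\<forall>f\<in>S. Cmp C g f = x f))" by (rule spec)
  then have "\<forall>x.
     ((\<forall>f\<in>S. x f \<in> hom C (Dom C f) W) \<and>
      (\<forall>f\<in>S. \<forall>h\<in>Ar C. Cod C h = Dom C f \<longrightarrow> x (Cmp C f h) = Cmp C (x f) h)) \<longrightarrow>
     (\<exists>!g. g \<in> hom C U W \<and> (\<forall>f\<in>S. Cmp C g f = x f))" using S by (rule bspec)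
  then have "((\<forall>f\<in>S. x f \<in> hom C (Dom C f) W) \<and>
      (\<forall>f\<in>S. \<forall>h\<in>Ar C. Cod C h = Dom C f \<longrightarrow> x (Cmp C f h) = Cmp C (x f) h)) \<longrightarrow>
     (\<exists>!g. g \<in> hom C U W \<and> (\<forall>f\<in>S. Cmp C g f = x f))" by (rule spec)
  then show ?thesis using H by (rule mp)
qed

lemma epi_cov: assumes sc: "subcanonical C J" and t: "covering_morphism C J t"
  and d: "d \<in> hom C (Cod C t) W" and d': "d' \<in> hom C (Cod C t) W" and e: "Cmp C d t = Cmp C d' t"
  shows "d = d'"
proof -
  let ?S = "gen_sieve C {t}" and ?U = "Cod C t"
  have tA: "t \<in> Ar C" and SJ: "?S \<in> J ?U" using t by (auto simp: covering_morphism_def)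
  have th: "t \<in> hom C (Dom C t) ?U" using tA by (simp add: hom_def)
  have W: "W \<in> Ob C" using d ar_cod by (auto simp: hom_def)
  let ?x = "\<lambda>s. Cmp C d s"
  have H: "(\<forall>f\<in>?S. ?x f \<in> hom C (Dom C f) W) \<and>
      (\<forall>f\<in>?S. \<forall>h\<in>Ar C. Cod C h = Dom C f \<longrightarrow> ?x (Cmp C f h) = Cmp C (?x f) h)"
  proof (intro conjI ballI impI)
    fix f assume "f \<in> ?S"
    then obtain h where f: "f = Cmp C t h" and h: "h \<in> hom C (Dom C h) (Dom C t)" unfolding gen1_iff by (auto simp: hom_def)
    have fh: "f \<in> hom C (Dom C h) ?U" using comp_hom[OF h th] f by simp
    then show "?x f \<in> hom C (Dom C f) W" using comp_hom[OF fh d] by (simp add: hom_def)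
    fix h2 assume h2: "h2 \<in> Ar C" "Cod C h2 = Dom C f"
    then have "h2 \<in> hom C (Dom C h2) (Dom C f)" by (simp add: hom_def)
    then show "?x (Cmp C f h2) = Cmp C (?x f) h2" using assoc[OF _ _ d] fh by (simp add: hom_def)
  qed
  have "\<exists>!g. g \<in> hom C ?U W \<and> (\<forall>f\<in>?S. Cmp C g f = ?x f)"
    using subc_use[OF sc W SJ H] .
  moreover have "\<forall>f\<in>?S. Cmp C d f = ?x f" by simp
  moreover have "\<forall>f\<in>?S. Cmp C d' f = ?x f"
  proof
    fix f assume "f \<in> ?S"
    then obtain h where f: "f = Cmp C t h" and h: "h \<in> hom C (Dom C h) (Dom C t)" unfolding gen1_iff by (auto simp: hom_def)
    show "Cmp C d' f = ?x f" using f assoc[OF h th d] assoc[OF h th d'] e by simp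
  qed
  ultimately show ?thesis using d d' by blast
qed

lemma pb_uniq: assumes pb: "is_pullback C t t P p q"
  and h: "h \<in> hom C T (Dom C t)" and h': "h' \<in> hom C T (Dom C t)" and e: "Cmp C t h = Cmp C t h'"
  obtains m where "m \<in> hom C T P" "Cmp C p m = h" "Cmp C q m = h'"
proof -
  have T: "T \<in> Ob C" using h ar_dom by (auto simp: hom_def)
  have "\<forall>T\<in>Ob C. \<forall>a \<in> hom C T (Dom C t). \<forall>b \<in> hom C T (Dom C t).
        Cmp C t a = Cmp C t b \<longrightarrow> (\<exists>!h. h \<in> hom C T P \<and> Cmp C p h = a \<and> Cmp C q h = b)"
    using pb unfolding is_pullback_def by blast
  then have "\<exists>!m. m \<in> hom C T P \<and> Cmp C p m = h \<and> Cmp C q m = h'" using T h h' e by blast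
  then show ?thesis using that by blast
qed

lemma desc_cov: assumes sc: "subcanonical C J" and t: "covering_morphism C J t"
  and pb: "is_pullback C t t P p q"
  and c: "c \<in> hom C (Dom C t) W" and e: "Cmp C c p = Cmp C c q"
  shows "\<exists>d\<in>hom C (Cod C t) W. Cmp C d t = c"
proof -
  let ?S = "gen_sieve C {t}" and ?U = "Cod C t"
  have tA: "t \<in> Ar C" and SJ: "?S \<in> J ?U" using t by (auto simp: covering_morphism_def)
  have th: "t \<in> hom C (Dom C t) ?U" using tA by (simp add: hom_def)
  have W: "W \<in> Ob C" using c ar_cod by (auto simp: hom_def)
  have ph: "p \<in> hom C P (Dom C t)" and qh: "q \<in> hom C P (Dom C t)" using pb unfolding is_pullback_def by auto
  have key: "Cmp C c h = Cmp C c h'" if h: "h \<in> hom C T (Dom C t)" and h': "h' \<in> hom C T (Dom C t)"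
    and eq: "Cmp C t h = Cmp C t h'" for h h' T
  proof -
    obtain m where m: "m \<in> hom C T P" "Cmp C p m = h" "Cmp C q m = h'" using pb_uniq[OF pb h h' eq] by blast
    show ?thesis using m assoc[OF m(1) ph c] assoc[OF m(1) qh c] e by simp
  qed
  define x where "x s = Cmp C c (SOME h. h \<in> Ar C \<and> Cod C h = Dom C t \<and> s = Cmp C t h)" for s
  have xval: "x (Cmp C t h) = Cmp C c h" if h: "h \<in> Ar C" "Cod C h = Dom C t" for h
  proof -
    let ?h0 = "SOME h0. h0 \<in> Ar C \<and> Cod C h0 = Dom C t \<and> Cmp C t h = Cmp C t h0"
    have "?h0 \<in> Ar C \<and> Cod C ?h0 = Dom C t \<and> Cmp C t h = Cmp C t ?h0"
      by (rule someI[of _ h]) (use h in simp)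
    then have h0: "?h0 \<in> Ar C" "Cod C ?h0 = Dom C t" "Cmp C t h = Cmp C t ?h0" by auto
    have "Dom C ?h0 = Dom C h"
    proof -
      have "Dom C (Cmp C t h) = Dom C h" using comp_hom[of h "Dom C h" "Dom C t" t ?U] h th by (simp add: hom_def)
      moreover have "Dom C (Cmp C t ?h0) = Dom C ?h0" using comp_hom[of ?h0 "Dom C ?h0" "Dom C t" t ?U] h0 th by (simp add: hom_def)
      ultimately show ?thesis using h0(3) by simp
    qed
    then have "Cmp C c ?h0 = Cmp C c h" using key[of ?h0 "Dom C h" h] h h0 by (simp add: hom_def)
    then show ?thesis unfolding x_def by simp
  qed
  have H: "(\<forall>f\<in>?S. x f \<in> hom C (Dom C f) W) \<and>
      (\<forall>f\<in>?S. \<forall>h\<in>Ar C. Cod C h = Dom C f \<longrightarrow> x (Cmp C f h) = Cmp C (x f) h)"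
  proof (intro conjI ballI impI)
    fix f assume "f \<in> ?S"
    then obtain h where f: "f = Cmp C t h" and hA: "h \<in> Ar C" "Cod C h = Dom C t" unfolding gen1_iff by auto
    have h: "h \<in> hom C (Dom C h) (Dom C t)" using hA by (simp add: hom_def)
    have fh: "f \<in> hom C (Dom C h) ?U" using comp_hom[OF h th] f by simp
    show "x f \<in> hom C (Dom C f) W" using comp_hom[OF h c] xval[OF hA] f fh by (simp add: hom_def)
    fix h2 assume h2: "h2 \<in> Ar C" "Cod C h2 = Dom C f"
    then have h2h: "h2 \<in> hom C (Dom C h2) (Dom C h)" using fh by (simp add: hom_def)
    have hh: "Cmp C h h2 \<in> hom C (Dom C h2) (Dom C t)" using comp_hom[OF h2h h] .
    have "Cmp C f h2 = Cmp C t (Cmp C h h2)" using f assoc[OF h2h h th] by simp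
    then have "x (Cmp C f h2) = Cmp C c (Cmp C h h2)" using xval[of "Cmp C h h2"] hh by (simp add: hom_def)
    also have "\<dots> = Cmp C (x f) h2" using assoc[OF h2h h c] xval[OF hA] f by simp
    finally show "x (Cmp C f h2) = Cmp C (x f) h2" .
  qed
  obtain g where g: "g \<in> hom C ?U W" "\<forall>f\<in>?S. Cmp C g f = x f"
    using subc_use[OF sc W SJ H] by blast
  have dt: "Dom C t \<in> Ob C" using tA ar_dom by simp
  have i: "Idt C (Dom C t) \<in> hom C (Dom C t) (Dom C t)" using id_hom[OF dt] .
  have "Cmp C t (Idt C (Dom C t)) \<in> ?S" unfolding gen1_iff using i by (auto simp: hom_def)
  then have "Cmp C g (Cmp C t (Idt C (Dom C t))) = Cmp C c (Idt C (Dom C t))"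
    using g(2) xval[of "Idt C (Dom C t)"] i by (auto simp: hom_def)
  then have "Cmp C g t = c" using idr[OF th] idr[OF c] by simp
  then show ?thesis using g(1) by blast
qed

end

context ccat begin

lemma natl_nat: "natl C X Y t \<Longrightarrow> u \<in> hom (pI X) m k \<Longrightarrow> Cmp C (pFa Y u) (t m) = Cmp C (t k) (pFa X u)"
  unfolding natl_def hom_def by auto

lemma natl_hom: "natl C X Y t \<Longrightarrow> i \<in> Ob (pI X) \<Longrightarrow> t i \<in> hom C (pF X i) (pF Y i)"
  unfolding natl_def by auto

lemma natl_I: "natl C X Y t \<Longrightarrow> pI X = pI Y" unfolding natl_def by auto

lemma desc_eqv: assumes V: "pob C V" and U: "pob C U" and t: "natl C V U t"
  and sc: "subcanonical C J" and cov: "\<forall>i\<in>Ob (pI V). covering_morphism C J (t i)"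
  and d: "d \<in> hom C (pF U k) Z" and d': "d' \<in> hom C (pF U k') Z"
  and e: "peqv C V (k, Cmp C d (t k)) (k', Cmp C d' (t k'))"
  shows "peqv C U (k, d) (k', d')"
proof -
  have I: "pI V = pI U" using natl_I[OF t] .
  obtain m u v where u: "u \<in> hom (pI V) m k" and v: "v \<in> hom (pI V) m k'"
    and e1: "Cmp C (Cmp C d (t k)) (pFa V u) = Cmp C (Cmp C d' (t k')) (pFa V v)" using e unfolding peqv_def by auto
  have m: "m \<in> Ob (pI V)" and k: "k \<in> Ob (pI V)" using pob_hom_ob[OF V u] by auto
  have k': "k' \<in> Ob (pI V)" using pob_hom_ob[OF V v] by auto
  have tm: "t m \<in> hom C (pF V m) (pF U m)" using natl_hom[OF t m] .
  have tk: "t k \<in> hom C (pF V k) (pF U k)" using natl_hom[OF t k] .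
  have tk': "t k' \<in> hom C (pF V k') (pF U k')" using natl_hom[OF t k'] .
  have Uu: "pFa U u \<in> hom C (pF U m) (pF U k)" using pob_Fa[OF U, of u m k] u I by simp
  have Uv: "pFa U v \<in> hom C (pF U m) (pF U k')" using pob_Fa[OF U, of v m k'] v I by simp
  have Vu: "pFa V u \<in> hom C (pF V m) (pF V k)" using pob_Fa[OF V u] .
  have Vv: "pFa V v \<in> hom C (pF V m) (pF V k')" using pob_Fa[OF V v] .
  have "Cmp C (Cmp C d (pFa U u)) (t m) = Cmp C d (Cmp C (t k) (pFa V u))"
    using assoc[OF tm Uu d] natl_nat[OF t u] by simp
  also have "\<dots> = Cmp C (Cmp C d' (t k')) (pFa V v)" using assoc[OF Vu tk d] e1 by simp
  also have "\<dots> = Cmp C d' (Cmp C (pFa U v) (t m))" using assoc[OF Vv tk' d'] natl_nat[OF t v] by simp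
  also have "\<dots> = Cmp C (Cmp C d' (pFa U v)) (t m)" using assoc[OF tm Uv d'] by simp
  finally have "Cmp C (Cmp C d (pFa U u)) (t m) = Cmp C (Cmp C d' (pFa U v)) (t m)" .
  moreover have "Cod C (t m) = pF U m" using tm by (simp add: hom_def)
  ultimately have "Cmp C d (pFa U u) = Cmp C d' (pFa U v)"
    using epi_cov[OF sc bspec[OF cov m], of "Cmp C d (pFa U u)" Z "Cmp C d' (pFa U v)"]
      comp_hom[OF Uu d] comp_hom[OF Uv d'] by simp
  then show ?thesis unfolding peqv_def using u v I by auto
qed

lemma asc_eqv: assumes V: "pob C V" and U: "pob C U" and t: "natl C V U t"
  and d: "d \<in> hom C (pF U k) Z" and d': "d' \<in> hom C (pF U k') Z"
  and e: "peqv C U (k, d) (k', d')"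
  shows "peqv C V (k, Cmp C d (t k)) (k', Cmp C d' (t k'))"
proof -
  have I: "pI V = pI U" using natl_I[OF t] .
  obtain m u v where u: "u \<in> hom (pI V) m k" and v: "v \<in> hom (pI V) m k'"
    and e1: "Cmp C d (pFa U u) = Cmp C d' (pFa U v)" using e I unfolding peqv_def by auto
  have m: "m \<in> Ob (pI V)" and k: "k \<in> Ob (pI V)" using pob_hom_ob[OF V u] by auto
  have k': "k' \<in> Ob (pI V)" using pob_hom_ob[OF V v] by auto
  have tm: "t m \<in> hom C (pF V m) (pF U m)" using natl_hom[OF t m] .
  have tk: "t k \<in> hom C (pF V k) (pF U k)" using natl_hom[OF t k] .
  have tk': "t k' \<in> hom C (pF V k') (pF U k')" using natl_hom[OF t k'] .
  have Uu: "pFa U u \<in> hom C (pF U m) (pF U k)" using pob_Fa[OF U, of u m k] u I by simp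
  have Uv: "pFa U v \<in> hom C (pF U m) (pF U k')" using pob_Fa[OF U, of v m k'] v I by simp
  have Vu: "pFa V u \<in> hom C (pF V m) (pF V k)" using pob_Fa[OF V u] .
  have Vv: "pFa V v \<in> hom C (pF V m) (pF V k')" using pob_Fa[OF V v] .
  have "Cmp C (Cmp C d (t k)) (pFa V u) = Cmp C (Cmp C d (pFa U u)) (t m)"
    using assoc[OF Vu tk d] assoc[OF tm Uu d] natl_nat[OF t u] by simp
  also have "\<dots> = Cmp C (Cmp C d' (pFa U v)) (t m)" using e1 by simp
  also have "\<dots> = Cmp C (Cmp C d' (t k')) (pFa V v)"
    using assoc[OF Vv tk' d'] assoc[OF tm Uv d'] natl_nat[OF t v] by simp
  finally show ?thesis unfolding peqv_def using u v by auto
qed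

lemma level_epi: assumes V: "pob C V" and U: "pob C U" and W: "pob C W" and t: "natl C V U t"
  and sc: "subcanonical C J" and cov: "\<forall>i\<in>Ob (pI V). covering_morphism C J (t i)"
  and g: "pro_mor C U W g" and g': "pro_mor C U W g'"
  and e: "pcomp C V U W g (plevel C V U t) = pcomp C V U W g' (plevel C V U t)"
  shows "g = g'"
proof (rule pm_ext[OF U g g'])
  have I: "pI V = pI U" using natl_I[OF t] .
  have T: "pro_mor C V U (plevel C V U t)" using plevel_pm[OF V U t] .
  fix j assume j: "j \<in> Ob (pI W)"
  obtain a where a: "a \<in> g j" using pm_ne[OF U g j] by blast
  obtain a' where a': "a' \<in> g' j" using pm_ne[OF U g' j] by blast
  have ar: "pr C U (pF W j) a" using pm_prep[OF g a] by auto
  have ar': "pr C U (pF W j) a'" using pm_prep[OF g' a'] by auto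
  have fa: "fst a \<in> Ob (pI U)" and sa: "snd a \<in> hom C (pF U (fst a)) (pF W j)" using ar by (auto simp: pr_def)
  have fa': "fst a' \<in> Ob (pI U)" and sa': "snd a' \<in> hom C (pF U (fst a')) (pF W j)" using ar' by (auto simp: pr_def)
  have m1: "(fst a, Cmp C (snd a) (t (fst a))) \<in> pcomp C V U W g (plevel C V U t) j"
    using pcomp_mem[OF V U W g T a plevel_mem[OF V t fa]] by simp
  have m2: "(fst a', Cmp C (snd a') (t (fst a'))) \<in> pcomp C V U W g (plevel C V U t) j"
    using pcomp_mem[OF V U W g' T a' plevel_mem[OF V t fa']] e by simp
  have "peqv C V (fst a, Cmp C (snd a) (t (fst a))) (fst a', Cmp C (snd a') (t (fst a')))"
    using pm_eqv[OF V pcomp_pm[OF V U W g T] m1 m2] .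
  then have "peqv C U (fst a, snd a) (fst a', snd a')"
    using desc_eqv[OF V U t sc cov sa sa'] by simp
  then have "a' \<in> g j" using pm_mem_iff[OF U g a] ar' by simp
  then show "\<exists>p. p \<in> g j \<and> p \<in> g' j" using a' by blast
qed

end

context ccat begin

lemma level_stepA: assumes V: "pob C V" and W: "pob C W" and Q: "pob C Q"
  and q1: "natl C Q V q1" and q2: "natl C Q V q2"
  and h: "pro_mor C V W h"
  and e: "pcomp C Q V W h (plevel C Q V q1) = pcomp C Q V W h (plevel C Q V q2)"
  and j: "j \<in> Ob (pI W)"
  shows "\<exists>k c. (k, c) \<in> h j \<and> Cmp C c (q1 k) = Cmp C c (q2 k)"
proof -
  have IQ: "pI Q = pI V" using natl_I[OF q1] .
  interpret I: ccat "pI V" using pob_cat[OF V] .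
  have Q1: "pro_mor C Q V (plevel C Q V q1)" using plevel_pm[OF Q V q1] .
  have Q2: "pro_mor C Q V (plevel C Q V q2)" using plevel_pm[OF Q V q2] .
  obtain p where p: "p \<in> h j" using pm_ne[OF V h j] by blast
  define i where "i = fst p"
  define b where "b = snd p"
  have pp: "pr C V (pF W j) p" using pm_prep[OF h p] by auto
  have i: "i \<in> Ob (pI V)" and b: "b \<in> hom C (pF V i) (pF W j)" using pp by (auto simp: pr_def i_def b_def)
  have pq1: "(i, q1 i) \<in> plevel C Q V q1 (fst p)" using plevel_mem[OF Q q1 i] i_def by simp
  have pq2: "(i, q2 i) \<in> plevel C Q V q2 (fst p)" using plevel_mem[OF Q q2 i] i_def by simp
  have m1: "(i, Cmp C b (q1 i)) \<in> pcomp C Q V W h (plevel C Q V q1) j"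
    using pcomp_mem[OF Q V W h Q1 p pq1] b_def by simp
  have m2: "(i, Cmp C b (q2 i)) \<in> pcomp C Q V W h (plevel C Q V q1) j"
    using pcomp_mem[OF Q V W h Q2 p pq2] b_def e by simp
  have "peqv C Q (i, Cmp C b (q1 i)) (i, Cmp C b (q2 i))"
    using pm_eqv[OF Q pcomp_pm[OF Q V W h Q1] m1 m2] .
  then obtain m u v where u: "u \<in> hom (pI V) m i" and v: "v \<in> hom (pI V) m i"
    and e1: "Cmp C (Cmp C b (q1 i)) (pFa Q u) = Cmp C (Cmp C b (q2 i)) (pFa Q v)"
    unfolding peqv_def IQ by auto
  obtain n w where w: "w \<in> hom (pI V) n m" and ew: "Cmp (pI V) u w = Cmp (pI V) v w"
    using pob_eq[OF V u v] by blast
  define z where "z = Cmp (pI V) u w"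
  have z: "z \<in> hom (pI V) n i" using I.comp_hom[OF w u] z_def by simp
  have n: "n \<in> Ob (pI V)" using pob_hom_ob[OF V w] by auto
  have q1i: "q1 i \<in> hom C (pF Q i) (pF V i)" using natl_hom[OF q1] i IQ by simp
  have q2i: "q2 i \<in> hom C (pF Q i) (pF V i)" using natl_hom[OF q2] i IQ by simp
  have q1n: "q1 n \<in> hom C (pF Q n) (pF V n)" using natl_hom[OF q1] n IQ by simp
  have q2n: "q2 n \<in> hom C (pF Q n) (pF V n)" using natl_hom[OF q2] n IQ by simp
  have Qu: "pFa Q u \<in> hom C (pF Q m) (pF Q i)" using pob_Fa[OF Q, of u m i] u IQ by simp
  have Qv: "pFa Q v \<in> hom C (pF Q m) (pF Q i)" using pob_Fa[OF Q, of v m i] v IQ by simp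
  have Qw: "pFa Q w \<in> hom C (pF Q n) (pF Q m)" using pob_Fa[OF Q, of w n m] w IQ by simp
  have Vz: "pFa V z \<in> hom C (pF V n) (pF V i)" using pob_Fa[OF V z] .
  have Qzu: "pFa Q z = Cmp C (pFa Q u) (pFa Q w)" using pob_Fcomp[OF Q, of w n m u i] w u IQ z_def by simp
  have Qzv: "pFa Q z = Cmp C (pFa Q v) (pFa Q w)" using pob_Fcomp[OF Q, of w n m v i] w v IQ z_def ew by simp
  have "Cmp C (Cmp C b (pFa V z)) (q1 n) = Cmp C b (Cmp C (q1 i) (pFa Q z))"
    using assoc[OF q1n Vz b] natl_nat[OF q1, of z n i] z IQ by simp
  also have "\<dots> = Cmp C (Cmp C (Cmp C b (q1 i)) (pFa Q u)) (pFa Q w)"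
    using Qzu assoc[OF Qw Qu comp_hom[OF q1i b]] assoc[OF comp_hom[OF Qw Qu] q1i b] by simp
  also have "\<dots> = Cmp C (Cmp C (Cmp C b (q2 i)) (pFa Q v)) (pFa Q w)" using e1 by simp
  also have "\<dots> = Cmp C b (Cmp C (q2 i) (pFa Q z))"
    using Qzv assoc[OF Qw Qv comp_hom[OF q2i b]] assoc[OF comp_hom[OF Qw Qv] q2i b] by simp
  also have "\<dots> = Cmp C (Cmp C b (pFa V z)) (q2 n)"
    using assoc[OF q2n Vz b] natl_nat[OF q2, of z n i] z IQ by simp
  finally have E: "Cmp C (Cmp C b (pFa V z)) (q1 n) = Cmp C (Cmp C b (pFa V z)) (q2 n)" .
  have pre: "peqv C V p (n, Cmp C (snd p) (pFa V z))" "pr C V (pF W j) (n, Cmp C (snd p) (pFa V z))"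
    using peqv_pre[OF V pp, of z n] z i_def by auto
  have "(n, Cmp C b (pFa V z)) \<in> h j" using pm_mem_iff[OF V h p] pre b_def by simp
  then show ?thesis using E by blast
qed

lemma level_desc: assumes V: "pob C V" and U: "pob C U" and W: "pob C W" and Q: "pob C Q"
  and t: "natl C V U t" and sc: "subcanonical C J" and cov: "\<forall>i\<in>Ob (pI V). covering_morphism C J (t i)"
  and q1: "natl C Q V q1" and q2: "natl C Q V q2"
  and pb: "\<forall>i\<in>Ob (pI V). is_pullback C (t i) (t i) (pF Q i) (q1 i) (q2 i)"
  and h: "pro_mor C V W h"
  and e: "pcomp C Q V W h (plevel C Q V q1) = pcomp C Q V W h (plevel C Q V q2)"
  shows "\<exists>g. pro_mor C U W g \<and> pcomp C V U W g (plevel C V U t) = h"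
proof -
  have I: "pI V = pI U" using natl_I[OF t] .
  have IQ: "pI Q = pI V" using natl_I[OF q1] .
  have T: "pro_mor C V U (plevel C V U t)" using plevel_pm[OF V U t] .
  have D: "\<exists>k d. k \<in> Ob (pI V) \<and> d \<in> hom C (pF U k) (pF W j) \<and> (k, Cmp C d (t k)) \<in> h j"
    if j: "j \<in> Ob (pI W)" for j
  proof -
    obtain k c where kc: "(k, c) \<in> h j" and ec: "Cmp C c (q1 k) = Cmp C c (q2 k)"
      using level_stepA[OF V W Q q1 q2 h e j] by blast
    have k: "k \<in> Ob (pI V)" and c: "c \<in> hom C (pF V k) (pF W j)" using pm_prep[OF h kc] by (auto simp: pr_def)
    have tk: "t k \<in> hom C (pF V k) (pF U k)" using natl_hom[OF t k] .
    obtain d where d: "d \<in> hom C (Cod C (t k)) (pF W j)" "Cmp C d (t k) = c"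
      using desc_cov[OF sc bspec[OF cov k] bspec[OF pb k], of c "pF W j"] c tk ec by (auto simp: hom_def)
    show ?thesis using k d kc tk by (auto simp: hom_def)
  qed
  define g where "g j = (if j \<in> Ob (pI W) then {x. pr C U (pF W j) x \<and> (fst x, Cmp C (snd x) (t (fst x))) \<in> h j} else {})" for j
  have gm: "pro_mor C U W g" unfolding pro_mor_def prep_pr
  proof (intro conjI ballI allI impI)
    fix j assume j: "j \<in> Ob (pI W)"
    obtain k d where k: "k \<in> Ob (pI V)" and d: "d \<in> hom C (pF U k) (pF W j)" and kd: "(k, Cmp C d (t k)) \<in> h j"
      using D[OF j] by blast
    have kdr: "pr C U (pF W j) (k, d)" using k d I by (simp add: pr_def)
    have "g j = pcls C U W j (k, d)"
    proof
      show "g j \<subseteq> pcls C U W j (k, d)"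
      proof
        fix x assume "x \<in> g j"
        then have xr: "pr C U (pF W j) x" and xh: "(fst x, Cmp C (snd x) (t (fst x))) \<in> h j" using j g_def by auto
        have sx: "snd x \<in> hom C (pF U (fst x)) (pF W j)" using xr by (simp add: pr_def)
        have "peqv C V (k, Cmp C d (t k)) (fst x, Cmp C (snd x) (t (fst x)))" using pm_eqv[OF V h kd xh] .
        then have "peqv C U (k, d) (fst x, snd x)" using desc_eqv[OF V U t sc cov d sx] by simp
        then show "x \<in> pcls C U W j (k, d)" using xr by (simp add: mem_pcls)
      qed
      show "pcls C U W j (k, d) \<subseteq> g j"
      proof
        fix x assume "x \<in> pcls C U W j (k, d)"
        then have xr: "pr C U (pF W j) x" and ex: "peqv C U (k, d) x" by (auto simp: mem_pcls)
        have fx: "fst x \<in> Ob (pI V)" and sx: "snd x \<in> hom C (pF U (fst x)) (pF W j)" using xr I by (auto simp: pr_def)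
        have "peqv C V (k, Cmp C d (t k)) (fst x, Cmp C (snd x) (t (fst x)))"
          using asc_eqv[OF V U t d sx] ex by simp
        moreover have "pr C V (pF W j) (fst x, Cmp C (snd x) (t (fst x)))"
          using fx comp_hom[OF natl_hom[OF t fx] sx] by (simp add: pr_def)
        ultimately have "(fst x, Cmp C (snd x) (t (fst x))) \<in> h j" using pm_mem_iff[OF V h kd] by simp
        then show "x \<in> g j" using xr j g_def by simp
      qed
    qed
    then show "\<exists>p. pr C U (pF W j) p \<and> g j = pcls C U W j p" using kdr by blast
  next
    fix j assume "j \<notin> Ob (pI W)" then show "g j = {}" using g_def by simp
  next
    fix v p assume v: "v \<in> Ar (pI W)" and p: "p \<in> g (Dom (pI W) v)"
    interpret IW: ccat "pI W" using pob_cat[OF W] .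
    define a where "a = Dom (pI W) v"
    define b where "b = Cod (pI W) v"
    have va: "a \<in> Ob (pI W)" "b \<in> Ob (pI W)" using v IW.ar_dom IW.ar_cod a_def b_def by auto
    have vh: "v \<in> hom (pI W) a b" using v by (simp add: hom_def a_def b_def)
    have Fv: "pFa W v \<in> hom C (pF W a) (pF W b)" using pob_Fa[OF W vh] .
    have pr1: "pr C U (pF W a) p" and ph: "(fst p, Cmp C (snd p) (t (fst p))) \<in> h a"
      using p va g_def a_def by auto
    have fp: "fst p \<in> Ob (pI V)" and sp: "snd p \<in> hom C (pF U (fst p)) (pF W a)" using pr1 I by (auto simp: pr_def)
    have "(fst p, Cmp C (pFa W v) (Cmp C (snd p) (t (fst p)))) \<in> h b" using pm_trans[OF h vh ph] by simp
    then have "(fst p, Cmp C (Cmp C (pFa W v) (snd p)) (t (fst p))) \<in> h b"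
      using assoc[OF natl_hom[OF t fp] sp Fv] by simp
    moreover have "pr C U (pF W b) (fst p, Cmp C (pFa W v) (snd p))" using pr1 comp_hom[OF sp Fv] by (simp add: pr_def)
    ultimately show "(fst p, Cmp C (pFa W v) (snd p)) \<in> g (Cod (pI W) v)" using va g_def b_def by simp
  qed
  have "pcomp C V U W g (plevel C V U t) = h"
  proof (rule pm_ext[OF V pcomp_pm[OF V U W gm T] h])
    fix j assume j: "j \<in> Ob (pI W)"
    obtain k d where k: "k \<in> Ob (pI V)" and d: "d \<in> hom C (pF U k) (pF W j)" and kd: "(k, Cmp C d (t k)) \<in> h j"
      using D[OF j] by blast
    have gk: "(k, d) \<in> g j" using j k d kd I g_def by (simp add: pr_def)
    have tk: "(k, t k) \<in> plevel C V U t (fst (k, d))" using plevel_mem[OF V t] k I by simp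
    have "(k, Cmp C d (t k)) \<in> pcomp C V U W g (plevel C V U t) j"
      using pcomp_mem[OF V U W gm T gk tk] by simp
    then show "\<exists>p. p \<in> pcomp C V U W g (plevel C V U t) j \<and> p \<in> h j" using kd by blast
  qed
  then show ?thesis using gm by blast
qed

end

context ccat begin

lemma pb_ex1: assumes pb: "is_pullback C f g P p q" and T: "T \<in> Ob C"
  and a: "a \<in> hom C T (Dom C f)" and b: "b \<in> hom C T (Dom C g)" and e: "Cmp C f a = Cmp C g b"
  shows "\<exists>!h. h \<in> hom C T P \<and> Cmp C p h = a \<and> Cmp C q h = b"
proof -
  have "\<forall>T\<in>Ob C. \<forall>a \<in> hom C T (Dom C f). \<forall>b \<in> hom C T (Dom C g).
        Cmp C f a = Cmp C g b \<longrightarrow> (\<exists>!h. h \<in> hom C T P \<and> Cmp C p h = a \<and> Cmp C q h = b)"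
    using pb unfolding is_pullback_def by blast
  then show ?thesis using T a b e by blast
qed

lemma levelwise_pb: assumes fl: "has_finite_limits C" and V: "pro_obj C A V" and U: "pob C U"
  and t: "natl C V U t"
  shows "\<exists>Q q1 q2. pro_obj C A Q \<and> pI Q = pI V \<and> natl C Q V q1 \<and> natl C Q V q2 \<and>
     (\<forall>i\<in>Ob (pI V). is_pullback C (t i) (t i) (pF Q i) (q1 i) (q2 i))"
proof -
  have Vp: "pob C V" using pro_obj_pob[OF V] .
  interpret I: ccat "pI V" using pob_cat[OF Vp] .
  have I: "pI V = pI U" using natl_I[OF t] .
  define pbt where "pbt i = (SOME x. is_pullback C (t i) (t i) (fst x) (fst (snd x)) (snd (snd x)))" for i
  define Qo where "Qo i = fst (pbt i)" for i
  define q1 where "q1 i = fst (snd (pbt i))" for i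
  define q2 where "q2 i = snd (snd (pbt i))" for i
  have PB: "is_pullback C (t i) (t i) (Qo i) (q1 i) (q2 i)" if i: "i \<in> Ob (pI V)" for i
  proof -
    have ti: "t i \<in> hom C (pF V i) (pF U i)" using natl_hom[OF t i] .
    then have "t i \<in> Ar C" by (simp add: hom_def)
    then obtain P p q where "is_pullback C (t i) (t i) P p q" using fl unfolding has_finite_limits_def by blast
    then have "is_pullback C (t i) (t i) (fst (P,p,q)) (fst (snd (P,p,q))) (snd (snd (P,p,q)))" by simp
    then have "is_pullback C (t i) (t i) (fst (pbt i)) (fst (snd (pbt i))) (snd (snd (pbt i)))"
      unfolding pbt_def by (rule someI)
    then show ?thesis unfolding Qo_def q1_def q2_def .
  qed
  have q1h: "q1 i \<in> hom C (Qo i) (pF V i)" and q2h: "q2 i \<in> hom C (Qo i) (pF V i)"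
    and Qob: "Qo i \<in> Ob C" and tq: "Cmp C (t i) (q1 i) = Cmp C (t i) (q2 i)"
    if i: "i \<in> Ob (pI V)" for i
  proof -
    have ti: "t i \<in> hom C (pF V i) (pF U i)" using natl_hom[OF t i] .
    have "q1 i \<in> hom C (Qo i) (Dom C (t i))" "q2 i \<in> hom C (Qo i) (Dom C (t i))" "Cmp C (t i) (q1 i) = Cmp C (t i) (q2 i)"
      using PB[OF i] unfolding is_pullback_def by auto
    then show "q1 i \<in> hom C (Qo i) (pF V i)" "q2 i \<in> hom C (Qo i) (pF V i)" "Cmp C (t i) (q1 i) = Cmp C (t i) (q2 i)"
      using ti by (auto simp: hom_def)
    then show "Qo i \<in> Ob C" using ar_dom[of "q1 i"] by (auto simp: hom_def)
  qed
  define Qa where "Qa u = (THE h. h \<in> hom C (Qo (Dom (pI V) u)) (Qo (Cod (pI V) u)) \<and>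
      Cmp C (q1 (Cod (pI V) u)) h = Cmp C (pFa V u) (q1 (Dom (pI V) u)) \<and>
      Cmp C (q2 (Cod (pI V) u)) h = Cmp C (pFa V u) (q2 (Dom (pI V) u)))" for u
  have EX: "\<exists>!h. h \<in> hom C (Qo a) (Qo c) \<and> Cmp C (q1 c) h = Cmp C (pFa V u) (q1 a) \<and>
      Cmp C (q2 c) h = Cmp C (pFa V u) (q2 a)" if u: "u \<in> hom (pI V) a c" for u a c
  proof -
    have a: "a \<in> Ob (pI V)" and c: "c \<in> Ob (pI V)" using pob_hom_ob[OF Vp u] by auto
    have Vu: "pFa V u \<in> hom C (pF V a) (pF V c)" using pob_Fa[OF Vp u] .
    have Uu: "pFa U u \<in> hom C (pF U a) (pF U c)" using pob_Fa[OF U, of u a c] u I by simp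
    have ta: "t a \<in> hom C (pF V a) (pF U a)" using natl_hom[OF t a] .
    have tc: "t c \<in> hom C (pF V c) (pF U c)" using natl_hom[OF t c] .
    have x1: "Cmp C (pFa V u) (q1 a) \<in> hom C (Qo a) (Dom C (t c))" using comp_hom[OF q1h[OF a] Vu] tc by (simp add: hom_def)
    have x2: "Cmp C (pFa V u) (q2 a) \<in> hom C (Qo a) (Dom C (t c))" using comp_hom[OF q2h[OF a] Vu] tc by (simp add: hom_def)
    have "Cmp C (t c) (Cmp C (pFa V u) (q1 a)) = Cmp C (pFa U u) (Cmp C (t a) (q1 a))"
      using assoc[OF q1h[OF a] Vu tc] assoc[OF q1h[OF a] ta Uu] natl_nat[OF t u] by simp
    also have "\<dots> = Cmp C (pFa U u) (Cmp C (t a) (q2 a))" using tq[OF a] by simp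
    also have "\<dots> = Cmp C (t c) (Cmp C (pFa V u) (q2 a))"
      using assoc[OF q2h[OF a] Vu tc] assoc[OF q2h[OF a] ta Uu] natl_nat[OF t u] by simp
    finally show ?thesis using pb_ex1[OF PB[OF c] Qob[OF a] x1 x2] by simp
  qed
  have QaP: "Qa u \<in> hom C (Qo a) (Qo c) \<and> Cmp C (q1 c) (Qa u) = Cmp C (pFa V u) (q1 a) \<and>
      Cmp C (q2 c) (Qa u) = Cmp C (pFa V u) (q2 a)" if u: "u \<in> hom (pI V) a c" for u a c
  proof -
    have da: "Dom (pI V) u = a" "Cod (pI V) u = c" using u by (auto simp: hom_def)
    show ?thesis unfolding Qa_def da using theI'[OF EX[OF u]] .
  qed
  have QaU: "Qa u = h" if u: "u \<in> hom (pI V) a c" and h: "h \<in> hom C (Qo a) (Qo c)"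
    and h1: "Cmp C (q1 c) h = Cmp C (pFa V u) (q1 a)" and h2: "Cmp C (q2 c) h = Cmp C (pFa V u) (q2 a)" for u a c h
    using EX[OF u] QaP[OF u] h h1 h2 by blast
  define Q where "Q = (pI V, Qo, Qa)"
  have pQ: "pI Q = pI V" "pF Q = Qo" "pFa Q = Qa" unfolding Q_def pI_def pF_def pFa_def by auto
  have fn: "is_functor (pI V) C Qo Qa" unfolding is_functor_def
  proof (intro conjI ballI impI)
    fix i assume i: "i \<in> Ob (pI V)"
    show "Qo i \<in> Ob C" using Qob[OF i] .
    have ii: "Idt (pI V) i \<in> hom (pI V) i i" using I.id_hom[OF i] .
    show "Qa (Idt (pI V) i) = Idt C (Qo i)"
    proof (rule QaU[OF ii id_hom[OF Qob[OF i]]])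
      show "Cmp C (q1 i) (Idt C (Qo i)) = Cmp C (pFa V (Idt (pI V) i)) (q1 i)"
        using idr[OF q1h[OF i]] idl[OF q1h[OF i]] pob_Fid[OF Vp i] by simp
      show "Cmp C (q2 i) (Idt C (Qo i)) = Cmp C (pFa V (Idt (pI V) i)) (q2 i)"
        using idr[OF q2h[OF i]] idl[OF q2h[OF i]] pob_Fid[OF Vp i] by simp
    qed
  next
    fix u assume "u \<in> Ar (pI V)"
    then have u: "u \<in> hom (pI V) (Dom (pI V) u) (Cod (pI V) u)" by (simp add: hom_def)
    show "Qa u \<in> hom C (Qo (Dom (pI V) u)) (Qo (Cod (pI V) u))" using QaP[OF u] by blast
  next
    fix u v assume uA: "u \<in> Ar (pI V)" and vA: "v \<in> Ar (pI V)" and uv: "Cod (pI V) u = Dom (pI V) v"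
    define a where "a = Dom (pI V) u"
    define b where "b = Cod (pI V) u"
    define c where "c = Cod (pI V) v"
    have u: "u \<in> hom (pI V) a b" using uA by (simp add: hom_def a_def b_def)
    have v: "v \<in> hom (pI V) b c" using vA uv by (simp add: hom_def b_def c_def)
    have vu: "Cmp (pI V) v u \<in> hom (pI V) a c" using I.comp_hom[OF u v] .
    have a: "a \<in> Ob (pI V)" and b: "b \<in> Ob (pI V)" and c: "c \<in> Ob (pI V)" using pob_hom_ob[OF Vp u] pob_hom_ob[OF Vp v] by auto
    note Pu = QaP[OF u] and Pv = QaP[OF v]
    have Vu: "pFa V u \<in> hom C (pF V a) (pF V b)" using pob_Fa[OF Vp u] .
    have Vv: "pFa V v \<in> hom C (pF V b) (pF V c)" using pob_Fa[OF Vp v] .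
    have "Qa (Cmp (pI V) v u) = Cmp C (Qa v) (Qa u)"
    proof (rule QaU[OF vu comp_hom[OF conjunct1[OF Pu] conjunct1[OF Pv]]])
      show "Cmp C (q1 c) (Cmp C (Qa v) (Qa u)) = Cmp C (pFa V (Cmp (pI V) v u)) (q1 a)"
        using assoc[OF conjunct1[OF Pu] conjunct1[OF Pv] q1h[OF c]] Pu Pv
          assoc[OF conjunct1[OF Pu] q1h[OF b] Vv] assoc[OF q1h[OF a] Vu Vv] pob_Fcomp[OF Vp u v] by simp
      show "Cmp C (q2 c) (Cmp C (Qa v) (Qa u)) = Cmp C (pFa V (Cmp (pI V) v u)) (q2 a)"
        using assoc[OF conjunct1[OF Pu] conjunct1[OF Pv] q2h[OF c]] Pu Pv
          assoc[OF conjunct1[OF Pu] q2h[OF b] Vv] assoc[OF q2h[OF a] Vu Vv] pob_Fcomp[OF Vp u v] by simp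
    qed
    then show "Qa (Cmp (pI V) v u) = Cmp C (Qa v) (Qa u)" .
  qed
  have QA: "pro_obj C A Q" using V fn unfolding pro_obj_def pQ by simp
  have n1: "natl C Q V q1" unfolding natl_def pQ
  proof (intro conjI ballI)
    fix i assume "i \<in> Ob (pI V)" then show "q1 i \<in> hom C (Qo i) (pF V i)" using q1h by blast
  next
    fix u assume "u \<in> Ar (pI V)"
    then have u: "u \<in> hom (pI V) (Dom (pI V) u) (Cod (pI V) u)" by (simp add: hom_def)
    show "Cmp C (pFa V u) (q1 (Dom (pI V) u)) = Cmp C (q1 (Cod (pI V) u)) (Qa u)" using QaP[OF u] by simp
  qed simp
  have n2: "natl C Q V q2" unfolding natl_def pQ
  proof (intro conjI ballI)
    fix i assume "i \<in> Ob (pI V)" then show "q2 i \<in> hom C (Qo i) (pF V i)" using q2h by blast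
  next
    fix u assume "u \<in> Ar (pI V)"
    then have u: "u \<in> hom (pI V) (Dom (pI V) u) (Cod (pI V) u)" by (simp add: hom_def)
    show "Cmp C (pFa V u) (q2 (Dom (pI V) u)) = Cmp C (q2 (Cod (pI V) u)) (Qa u)" using QaP[OF u] by simp
  qed simp
  show ?thesis using QA pQ n1 n2 PB by (intro exI[of _ Q] exI[of _ q1] exI[of _ q2]) auto
qed

end

theorem lemma6p4:
  fixes C :: "('o,'a) cat" and J :: "'o \<Rightarrow> 'a set set" and A :: "'x set"
    and V U W P :: "('i,'o,'a) proobj"
    and f p1 p2 :: "'i \<Rightarrow> ('i \<times> 'a) set"
  assumes "admissible C J"
    and "infinite A"
    and "pro_obj C A V" and "pro_obj C A U" and "pro_obj C A W"
    and "pro_covering C J A V U f"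
    and "pro_pullback C A V V U f f P p1 p2"
  shows "(\<forall>g\<in>pmor C U W. pcomp C P V W (pcomp C V U W g f) p1
                          = pcomp C P V W (pcomp C V U W g f) p2)
       \<and> inj_on (\<lambda>g. pcomp C V U W g f) (pmor C U W)
       \<and> (\<lambda>g. pcomp C V U W g f) ` pmor C U W
           = {h \<in> pmor C V W. pcomp C P V W h p1 = pcomp C P V W h p2}"
proof -
  have cs: "coherent_site C J" and sc: "subcanonical C J" using assms(1) unfolding admissible_def by auto
  have cat: "category C" and fl: "has_finite_limits C" using cs unfolding coherent_site_def by auto
  interpret ccat C using cat by (simp add: ccat_def)
  have pV: "pob C V" and pU: "pob C U" and pW: "pob C W"
    using pro_obj_pob[OF assms(3)] pro_obj_pob[OF assms(4)] pro_obj_pob[OF assms(5)] by auto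
  have fm: "pro_mor C V U f" using assms(6) unfolding pro_covering_def by auto
  obtain V' U' t \<theta>V \<theta>U where V': "pro_obj C A V'" and U': "pro_obj C A U'" and IVU: "pI V' = pI U'"
    and th: "\<forall>i\<in>Ob (pI V'). t i \<in> hom C (pF V' i) (pF U' i) \<and> covering_morphism C J (t i)"
    and nt: "\<forall>u\<in>Ar (pI V'). Cmp C (pFa U' u) (t (Dom (pI V') u)) = Cmp C (t (Cod (pI V') u)) (pFa V' u)"
    and isoV: "pro_iso C V V' \<theta>V" and isoU: "pro_iso C U U' \<theta>U"
    and H0: "pcomp C V U U' \<theta>U f = pcomp C V V' U' (plevel C V' U' t) \<theta>V"
    using assms(6) unfolding pro_covering_def by blast
  have pV': "pob C V'" and pU': "pob C U'" using pro_obj_pob[OF V'] pro_obj_pob[OF U'] by auto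
  have t: "natl C V' U' t" unfolding natl_def using IVU th nt by auto
  have cov: "\<forall>i\<in>Ob (pI V'). covering_morphism C J (t i)" using th by auto
  define T where "T = plevel C V' U' t"
  have Tm: "pro_mor C V' U' T" unfolding T_def using plevel_pm[OF pV' pU' t] .
  obtain \<psi>V where thV: "pro_mor C V V' \<theta>V" and psV: "pro_mor C V' V \<psi>V"
    and iV1: "pcomp C V V' V \<psi>V \<theta>V = pid C V" and iV2: "pcomp C V' V V' \<theta>V \<psi>V = pid C V'"
    using isoV unfolding pro_iso_def by blast
  obtain \<psi>U where thU: "pro_mor C U U' \<theta>U" and psU: "pro_mor C U' U \<psi>U"
    and iU1: "pcomp C U U' U \<psi>U \<theta>U = pid C U" and iU2: "pcomp C U' U U' \<theta>U \<psi>U = pid C U'"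
    using isoU unfolding pro_iso_def by blast
  have pb: "pro_obj C A P" "pro_mor C P V p1" "pro_mor C P V p2"
    "pcomp C P V U f p1 = pcomp C P V U f p2"
    and pbU: "\<forall>T. pro_obj C A T \<longrightarrow> (\<forall>a\<in>pmor C T V. \<forall>b\<in>pmor C T V.
        pcomp C T V U f a = pcomp C T V U f b \<longrightarrow>
        (\<exists>!h. h \<in> pmor C T P \<and> pcomp C T P V p1 h = a \<and> pcomp C T P V p2 h = b))"
    using assms(7) unfolding pro_pullback_def by auto
  have pP: "pob C P" using pro_obj_pob[OF pb(1)] .
  have TV: "pro_mor C V V' \<theta>V" using thV .
  have Tthv: "pro_mor C V U' (pcomp C V V' U' T \<theta>V)" using pcomp_pm[OF pV pV' pU' Tm thV] .
  have F: "f = pcomp C V U' U \<psi>U (pcomp C V V' U' T \<theta>V)"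
  proof -
    have "f = pcomp C V U U (pid C U) f" using pid_left[OF pV pU fm] by simp
    also have "\<dots> = pcomp C V U U (pcomp C U U' U \<psi>U \<theta>U) f" using iU1 by simp
    also have "\<dots> = pcomp C V U' U \<psi>U (pcomp C V U U' \<theta>U f)" using pcomp_assoc[OF pV pU pU' pU psU thU fm] by simp
    finally show ?thesis using H0 T_def by simp
  qed
  have C1: "\<forall>g\<in>pmor C U W. pcomp C P V W (pcomp C V U W g f) p1 = pcomp C P V W (pcomp C V U W g f) p2"
  proof
    fix g assume "g \<in> pmor C U W"
    then have g: "pro_mor C U W g" by (simp add: pmor_def)
    have "pcomp C P V W (pcomp C V U W g f) p1 = pcomp C P U W g (pcomp C P V U f p1)"
      using pcomp_assoc[OF pP pV pU pW g fm pb(2)] by simp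
    also have "\<dots> = pcomp C P U W g (pcomp C P V U f p2)" using pb(4) by simp
    also have "\<dots> = pcomp C P V W (pcomp C V U W g f) p2"
      using pcomp_assoc[OF pP pV pU pW g fm pb(3)] by simp
    finally show "pcomp C P V W (pcomp C V U W g f) p1 = pcomp C P V W (pcomp C V U W g f) p2" .
  qed
  have GF: "pcomp C V U W g f = pcomp C V V' W (pcomp C V' U' W (pcomp C U' U W g \<psi>U) T) \<theta>V"
    if g: "pro_mor C U W g" for g
  proof -
    have G: "pro_mor C U' W (pcomp C U' U W g \<psi>U)" using pcomp_pm[OF pU' pU pW g psU] .
    have "pcomp C V U W g f = pcomp C V U W g (pcomp C V U' U \<psi>U (pcomp C V V' U' T \<theta>V))" using F by simp
    also have "\<dots> = pcomp C V U' W (pcomp C U' U W g \<psi>U) (pcomp C V V' U' T \<theta>V)"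
      using pcomp_assoc[OF pV pU' pU pW g psU Tthv] .
    also have "\<dots> = pcomp C V V' W (pcomp C V' U' W (pcomp C U' U W g \<psi>U) T) \<theta>V"
      using pcomp_assoc[OF pV pV' pU' pW G Tm thV] .
    finally show ?thesis .
  qed
  have GU: "g = pcomp C U U' W (pcomp C U' U W g \<psi>U) \<theta>U" if g: "pro_mor C U W g" for g
  proof -
    have "g = pcomp C U U W g (pid C U)" using pid_right[OF pU pW g] by simp
    also have "\<dots> = pcomp C U U W g (pcomp C U U' U \<psi>U \<theta>U)" using iU1 by simp
    also have "\<dots> = pcomp C U U' W (pcomp C U' U W g \<psi>U) \<theta>U" using pcomp_assoc[OF pU pU' pU pW g psU thU] .
    finally show ?thesis .
  qed
  have cancelV: "X = Y" if X: "pro_mor C V' W X" and Y: "pro_mor C V' W Y"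
    and e: "pcomp C V V' W X \<theta>V = pcomp C V V' W Y \<theta>V" for X Y
  proof -
    have "X = pcomp C V' V' W X (pid C V')" using pid_right[OF pV' pW X] by simp
    also have "\<dots> = pcomp C V' V W (pcomp C V V' W X \<theta>V) \<psi>V"
      using pcomp_assoc[OF pV' pV pV' pW X thV psV] iV2 by simp
    also have "\<dots> = pcomp C V' V W (pcomp C V V' W Y \<theta>V) \<psi>V" using e by simp
    also have "\<dots> = pcomp C V' V' W Y (pid C V')"
      using pcomp_assoc[OF pV' pV pV' pW Y thV psV] iV2 by simp
    also have "\<dots> = Y" using pid_right[OF pV' pW Y] .
    finally show ?thesis .
  qed
  have C2: "inj_on (\<lambda>g. pcomp C V U W g f) (pmor C U W)"
  proof (rule inj_onI)
    fix g g' assume "g \<in> pmor C U W" "g' \<in> pmor C U W" and e: "pcomp C V U W g f = pcomp C V U W g' f"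
    then have g: "pro_mor C U W g" and g': "pro_mor C U W g'" by (auto simp: pmor_def)
    have G: "pro_mor C U' W (pcomp C U' U W g \<psi>U)" using pcomp_pm[OF pU' pU pW g psU] .
    have G': "pro_mor C U' W (pcomp C U' U W g' \<psi>U)" using pcomp_pm[OF pU' pU pW g' psU] .
    have "pcomp C V' U' W (pcomp C U' U W g \<psi>U) T = pcomp C V' U' W (pcomp C U' U W g' \<psi>U) T"
      using cancelV[OF pcomp_pm[OF pV' pU' pW G Tm] pcomp_pm[OF pV' pU' pW G' Tm]] GF[OF g] GF[OF g'] e by simp
    then have "pcomp C U' U W g \<psi>U = pcomp C U' U W g' \<psi>U"
      using level_epi[OF pV' pU' pW t sc cov G G'] T_def by simp
    then show "g = g'" using GU[OF g] GU[OF g'] by simp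
  qed
  have C3a: "(\<lambda>g. pcomp C V U W g f) ` pmor C U W \<subseteq> {h \<in> pmor C V W. pcomp C P V W h p1 = pcomp C P V W h p2}"
    using C1 pcomp_pm[OF pV pU pW _ fm] by (auto simp: pmor_def)
  have C3b: "{h \<in> pmor C V W. pcomp C P V W h p1 = pcomp C P V W h p2} \<subseteq> (\<lambda>g. pcomp C V U W g f) ` pmor C U W"
  proof
    fix h assume "h \<in> {h \<in> pmor C V W. pcomp C P V W h p1 = pcomp C P V W h p2}"
    then have h: "pro_mor C V W h" and eh: "pcomp C P V W h p1 = pcomp C P V W h p2" by (auto simp: pmor_def)
    obtain Q q1 q2 where QA: "pro_obj C A Q" and IQ: "pI Q = pI V'" and n1: "natl C Q V' q1" and n2: "natl C Q V' q2"
      and qpb: "\<forall>i\<in>Ob (pI V'). is_pullback C (t i) (t i) (pF Q i) (q1 i) (q2 i)"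
      using levelwise_pb[OF fl V' pU' t] by blast
    have pQ: "pob C Q" using pro_obj_pob[OF QA] .
    define Q1 where "Q1 = plevel C Q V' q1"
    define Q2 where "Q2 = plevel C Q V' q2"
    have Q1m: "pro_mor C Q V' Q1" unfolding Q1_def using plevel_pm[OF pQ pV' n1] .
    have Q2m: "pro_mor C Q V' Q2" unfolding Q2_def using plevel_pm[OF pQ pV' n2] .
    have TQ: "pcomp C Q V' U' T Q1 = pcomp C Q V' U' T Q2"
    proof (rule pm_ext[OF pQ pcomp_pm[OF pQ pV' pU' Tm Q1m] pcomp_pm[OF pQ pV' pU' Tm Q2m]])
      fix i assume iU: "i \<in> Ob (pI U')"
      then have i: "i \<in> Ob (pI V')" using IVU by simp
      have ti: "(i, t i) \<in> T i" unfolding T_def using plevel_mem[OF pV' t iU] .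
      have a1: "(i, q1 i) \<in> Q1 (fst (i, t i))" unfolding Q1_def using plevel_mem[OF pQ n1, of i] i by simp
      have a2: "(i, q2 i) \<in> Q2 (fst (i, t i))" unfolding Q2_def using plevel_mem[OF pQ n2, of i] i by simp
      have "Cmp C (t i) (q1 i) = Cmp C (t i) (q2 i)" using bspec[OF qpb i] unfolding is_pullback_def by auto
      then show "\<exists>p. p \<in> pcomp C Q V' U' T Q1 i \<and> p \<in> pcomp C Q V' U' T Q2 i"
        using pcomp_mem[OF pQ pV' pU' Tm Q1m ti a1] pcomp_mem[OF pQ pV' pU' Tm Q2m ti a2] by auto
    qed
    have K: "pcomp C V' V U f \<psi>V = pcomp C V' U' U \<psi>U T"
    proof -
      have "pcomp C V' V U f \<psi>V = pcomp C V' V U (pcomp C V U' U \<psi>U (pcomp C V V' U' T \<theta>V)) \<psi>V" using F by simp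
      also have "\<dots> = pcomp C V' U' U \<psi>U (pcomp C V' V U' (pcomp C V V' U' T \<theta>V) \<psi>V)"
        using pcomp_assoc[OF pV' pV pU' pU psU Tthv psV] by simp
      also have "pcomp C V' V U' (pcomp C V V' U' T \<theta>V) \<psi>V = pcomp C V' V' U' T (pcomp C V' V V' \<theta>V \<psi>V)"
        using pcomp_assoc[OF pV' pV pV' pU' Tm thV psV] by simp
      also have "\<dots> = T" using iV2 pid_right[OF pV' pU' Tm] by simp
      finally show ?thesis .
    qed
    have fa: "pcomp C Q V U f (pcomp C Q V' V \<psi>V Qk) = pcomp C Q U' U \<psi>U (pcomp C Q V' U' T Qk)"
      if Qk: "pro_mor C Q V' Qk" for Qk
    proof -
      have "pcomp C Q V U f (pcomp C Q V' V \<psi>V Qk) = pcomp C Q V' U (pcomp C V' V U f \<psi>V) Qk"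
        using pcomp_assoc[OF pQ pV' pV pU fm psV Qk] .
      also have "\<dots> = pcomp C Q V' U (pcomp C V' U' U \<psi>U T) Qk" using K by simp
      also have "\<dots> = pcomp C Q U' U \<psi>U (pcomp C Q V' U' T Qk)"
        using pcomp_assoc[OF pQ pV' pU' pU psU Tm Qk] by simp
      finally show ?thesis .
    qed
    define a1 where "a1 = pcomp C Q V' V \<psi>V Q1"
    define a2 where "a2 = pcomp C Q V' V \<psi>V Q2"
    have a1m: "a1 \<in> pmor C Q V" unfolding a1_def pmor_def using pcomp_pm[OF pQ pV' pV psV Q1m] by simp
    have a2m: "a2 \<in> pmor C Q V" unfolding a2_def pmor_def using pcomp_pm[OF pQ pV' pV psV Q2m] by simp
    have "pcomp C Q V U f a1 = pcomp C Q V U f a2" unfolding a1_def a2_def using fa[OF Q1m] fa[OF Q2m] TQ by simp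
    then obtain m where m: "m \<in> pmor C Q P" and m1: "pcomp C Q P V p1 m = a1" and m2: "pcomp C Q P V p2 m = a2"
      using pbU QA a1m a2m by blast
    have mm: "pro_mor C Q P m" using m by (simp add: pmor_def)
    define h' where "h' = pcomp C V' V W h \<psi>V"
    have h'm: "pro_mor C V' W h'" unfolding h'_def using pcomp_pm[OF pV' pV pW h psV] .
    have hk: "pcomp C Q V' W h' Qk = pcomp C Q P W (pcomp C P V W h pk) m"
      if Qk: "pro_mor C Q V' Qk" and pk: "pro_mor C P V pk" and ak: "pcomp C Q P V pk m = pcomp C Q V' V \<psi>V Qk"
      for Qk pk
    proof -
      have "pcomp C Q V' W h' Qk = pcomp C Q V W h (pcomp C Q V' V \<psi>V Qk)"
        unfolding h'_def using pcomp_assoc[OF pQ pV' pV pW h psV Qk] by simp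
      also have "\<dots> = pcomp C Q V W h (pcomp C Q P V pk m)" using ak by simp
      also have "\<dots> = pcomp C Q P W (pcomp C P V W h pk) m" using pcomp_assoc[OF pQ pP pV pW h pk mm] .
      finally show ?thesis .
    qed
    have eh': "pcomp C Q V' W h' (plevel C Q V' q1) = pcomp C Q V' W h' (plevel C Q V' q2)"
      using hk[OF Q1m pb(2)] hk[OF Q2m pb(3)] m1 m2 eh unfolding a1_def a2_def Q1_def Q2_def by simp
    obtain g' where g': "pro_mor C U' W g'" and g'T: "pcomp C V' U' W g' T = h'"
      using level_desc[OF pV' pU' pW pQ t sc cov n1 n2 qpb h'm eh'] T_def by blast
    define g where "g = pcomp C U U' W g' \<theta>U"
    have gm: "pro_mor C U W g" unfolding g_def using pcomp_pm[OF pU pU' pW g' thU] .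
    have "pcomp C V U W g f = pcomp C V U' W g' (pcomp C V U U' \<theta>U f)"
      unfolding g_def using pcomp_assoc[OF pV pU pU' pW g' thU fm] by simp
    also have "\<dots> = pcomp C V V' W (pcomp C V' U' W g' T) \<theta>V"
      using H0 pcomp_assoc[OF pV pV' pU' pW g' Tm thV] T_def by simp
    also have "\<dots> = pcomp C V V' W h' \<theta>V" using g'T by simp
    also have "\<dots> = pcomp C V V W h (pcomp C V V' V \<psi>V \<theta>V)"
      unfolding h'_def using pcomp_assoc[OF pV pV' pV pW h psV thV] by simp
    also have "\<dots> = h" using iV1 pid_right[OF pV pW h] by simp
    finally show "h \<in> (\<lambda>g. pcomp C V U W g f) ` pmor C U W" using gm by (auto simp: pmor_def)
  qed
  show ?thesis using C1 C2 C3a C3b by blast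
qed

end
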